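(* Let $\mathcal{H}$ be a complex linear space with a non-degenerate indefinite inner product $[\cdot,\cdot]$, and let $\mathcal{H}=\mathcal{L}_+[\dot+]\mathcal{L}_-$ and $\mathcal{H}=\mathcal{M}_+[\dot+]\mathcal{M}_-$ be two fundamental decompositions with associated inner products $\langle\cdot,\cdot\rangle_{\mathcal{L}},\langle\cdot,\cdot\rangle_{\mathcal{M}}$, norms $\|\cdot\|_{\mathcal{L}},\|\cdot\|_{\mathcal{M}}$ and fundamental symmetries $J_{\mathcal{L}},J_{\mathcal{M}}$. Suppose the norms $\|\cdot\|_{\mathcal{L}}$ and $\|\cdot\|_{\mathcal{M}}$ are equivalent on $\mathcal{H}$, let $\mathcal{H}_{ext}$ denote the common completion of $\mathcal{H}$ with respect to these norms, and denote again by $J_{\mathcal{L}},J_{\mathcal{M}}$ their extensions by continuity to $\mathcal{H}_{ext}$ (and by $\langle\cdot,\cdot\rangle_{\mathcal{L}},\langle\cdot,\cdot\rangle_{\mathcal{M}}$ the extended inner products). Then there exists an operator $Q$ on $\mathcal{H}_{ext}$ which, for each $\mathcal{X}\in\{\mathcal{L},\mathcal{M}\}$, is bounded and self-adjoint in the Hilbert space $(\mathcal{H}_{ext},\langle\cdot,\cdot\rangle_{\mathcal{X}})$ and satisfies $J_{\mathcal{X}}Q=-QJ_{\mathcal{X}}$, and such that $$J_{\mathcal{L}}J_{\mathcal{M}}=e^{Q},\qquad J_{\mathcal{M}}J_{\mathcal{L}}=e^{-Q}.$$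
   Context: An indefinite inner product is a Hermitian sesquilinear form $[\cdot,\cdot]$ (linear in the second argument) with vectors of both positive and negative square; non-degenerate means $[f,g]=0\ \forall g$ implies $f=0$. A subspace is positive (negative) if every nonzero vector in it has $[f,f]>0$ ($<0$). A fundamental decomposition $\mathcal{H}=\mathcal{L}_+[\dot+]\mathcal{L}_-$ is a direct sum of a positive subspace $\mathcal{L}_+$ and a negative subspace $\mathcal{L}_-$ which are mutually $[\cdot,\cdot]$-orthogonal. Its associated definite inner product is $\langle f,g\rangle_{\mathcal{L}}=[f_+,g_+]-[f_-,g_-]$ ($f=f_++f_-$, $g=g_++g_-$, $f_\pm,g_\pm\in\mathcal{L}_\pm$), norm $\|f\|_{\mathcal{L}}=\sqrt{\langle f,f\rangle_{\mathcal{L}}}$, and fundamental symmetry $J_{\mathcal{L}}(f_++f_-)=f_+-f_-$, so that $\langle f,g\rangle_{\mathcal{L}}=[J_{\mathcal{L}}f,g]$. The same notation is used for $\mathcal{M}_\pm$. When the norms are equivalent, $J_{\mathcal{L}}$ and $J_{\mathcal{M}}$ are bounded in either norm and so extend by continuity. *)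

theory Defs
  imports "HOL-Analysis.Analysis"
begin

(* Complex linear spaces are modelled by a type 'a::ab_group_add together with an
   explicit complex scalar multiplication sc satisfying the vector_space locale. *)

definition herm_sesq :: "(complex \<Rightarrow> 'a::ab_group_add \<Rightarrow> 'a) \<Rightarrow> ('a \<Rightarrow> 'a \<Rightarrow> complex) \<Rightarrow> bool" where
  "herm_sesq sc ip \<longleftrightarrow>
     (\<forall>x y z. ip x (y + z) = ip x y + ip x z) \<and>
     (\<forall>c x y. ip x (sc c y) = c * ip x y) \<and>
     (\<forall>x y. ip y x = cnj (ip x y))"

definition non_degenerate :: "('a::ab_group_add \<Rightarrow> 'a \<Rightarrow> complex) \<Rightarrow> bool" where
  "non_degenerate ip \<longleftrightarrow> (\<forall>f. (\<forall>g. ip f g = 0) \<longrightarrow> f = 0)"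

definition indefinite :: "('a \<Rightarrow> 'a \<Rightarrow> complex) \<Rightarrow> bool" where
  "indefinite ip \<longleftrightarrow> (\<exists>f. Re (ip f f) > 0) \<and> (\<exists>g. Re (ip g g) < 0)"

definition positive_subspace :: "(complex \<Rightarrow> 'a::ab_group_add \<Rightarrow> 'a) \<Rightarrow> ('a \<Rightarrow> 'a \<Rightarrow> complex) \<Rightarrow> 'a set \<Rightarrow> bool" where
  "positive_subspace sc ip S \<longleftrightarrow> module.subspace sc S \<and> (\<forall>f\<in>S. f \<noteq> 0 \<longrightarrow> Re (ip f f) > 0)"

definition negative_subspace :: "(complex \<Rightarrow> 'a::ab_group_add \<Rightarrow> 'a) \<Rightarrow> ('a \<Rightarrow> 'a \<Rightarrow> complex) \<Rightarrow> 'a set \<Rightarrow> bool" where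
  "negative_subspace sc ip S \<longleftrightarrow> module.subspace sc S \<and> (\<forall>f\<in>S. f \<noteq> 0 \<longrightarrow> Re (ip f f) < 0)"

definition fundamental_decomposition ::
  "(complex \<Rightarrow> 'a::ab_group_add \<Rightarrow> 'a) \<Rightarrow> ('a \<Rightarrow> 'a \<Rightarrow> complex) \<Rightarrow> 'a set \<Rightarrow> 'a set \<Rightarrow> bool" where
  "fundamental_decomposition sc ip Lp Lm \<longleftrightarrow>
     positive_subspace sc ip Lp \<and> negative_subspace sc ip Lm \<and>
     Lp \<inter> Lm = {0} \<and> (\<forall>f. \<exists>u\<in>Lp. \<exists>v\<in>Lm. f = u + v) \<and>
     (\<forall>u\<in>Lp. \<forall>v\<in>Lm. ip u v = 0)"

definition fd_plus :: "'a::ab_group_add set \<Rightarrow> 'a set \<Rightarrow> 'a \<Rightarrow> 'a" where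
  "fd_plus Lp Lm f = (THE u. u \<in> Lp \<and> f - u \<in> Lm)"

definition fd_minus :: "'a::ab_group_add set \<Rightarrow> 'a set \<Rightarrow> 'a \<Rightarrow> 'a" where
  "fd_minus Lp Lm f = f - fd_plus Lp Lm f"

definition fd_ip :: "('a::ab_group_add \<Rightarrow> 'a \<Rightarrow> complex) \<Rightarrow> 'a set \<Rightarrow> 'a set \<Rightarrow> 'a \<Rightarrow> 'a \<Rightarrow> complex" where
  "fd_ip ip Lp Lm f g =
     ip (fd_plus Lp Lm f) (fd_plus Lp Lm g) - ip (fd_minus Lp Lm f) (fd_minus Lp Lm g)"

definition form_norm :: "('b \<Rightarrow> 'b \<Rightarrow> complex) \<Rightarrow> 'b \<Rightarrow> real" where
  "form_norm p x = sqrt (Re (p x x))"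

definition fd_norm :: "('a::ab_group_add \<Rightarrow> 'a \<Rightarrow> complex) \<Rightarrow> 'a set \<Rightarrow> 'a set \<Rightarrow> 'a \<Rightarrow> real" where
  "fd_norm ip Lp Lm f = form_norm (fd_ip ip Lp Lm) f"

definition fd_J :: "'a::ab_group_add set \<Rightarrow> 'a set \<Rightarrow> 'a \<Rightarrow> 'a" where
  "fd_J Lp Lm f = fd_plus Lp Lm f - fd_minus Lp Lm f"

definition norms_equiv :: "('b \<Rightarrow> real) \<Rightarrow> ('b \<Rightarrow> real) \<Rightarrow> bool" where
  "norms_equiv N1 N2 \<longleftrightarrow> (\<exists>c C. c > 0 \<and> C > 0 \<and> (\<forall>x. c * N1 x \<le> N2 x \<and> N2 x \<le> C * N1 x))"

definition inner_product_form :: "(complex \<Rightarrow> 'b::ab_group_add \<Rightarrow> 'b) \<Rightarrow> ('b \<Rightarrow> 'b \<Rightarrow> complex) \<Rightarrow> bool" where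
  "inner_product_form sc p \<longleftrightarrow> herm_sesq sc p \<and> (\<forall>x. x \<noteq> 0 \<longrightarrow> Re (p x x) > 0)"

definition complete_wrt :: "('b::ab_group_add \<Rightarrow> real) \<Rightarrow> bool" where
  "complete_wrt N \<longleftrightarrow>
     (\<forall>X::nat \<Rightarrow> 'b. (\<forall>e>0. \<exists>M. \<forall>m\<ge>M. \<forall>n\<ge>M. N (X m - X n) < e) \<longrightarrow>
        (\<exists>l. (\<lambda>n. N (X n - l)) \<longlonglongrightarrow> 0))"

definition dense_image :: "('b::ab_group_add \<Rightarrow> real) \<Rightarrow> ('a \<Rightarrow> 'b) \<Rightarrow> bool" where
  "dense_image N \<iota> \<longleftrightarrow> (\<forall>y e. e > 0 \<longrightarrow> (\<exists>x. N (y - \<iota> x) < e))"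

definition bounded_wrt :: "('b \<Rightarrow> real) \<Rightarrow> ('b \<Rightarrow> 'b) \<Rightarrow> bool" where
  "bounded_wrt N T \<longleftrightarrow> (\<exists>K. \<forall>x. N (T x) \<le> K * N x)"

definition self_adjoint_wrt :: "('b \<Rightarrow> 'b \<Rightarrow> complex) \<Rightarrow> ('b \<Rightarrow> 'b) \<Rightarrow> bool" where
  "self_adjoint_wrt p T \<longleftrightarrow> (\<forall>x y. p (T x) y = p x (T y))"

definition common_completion ::
  "(complex \<Rightarrow> 'a::ab_group_add \<Rightarrow> 'a) \<Rightarrow> ('a \<Rightarrow> 'a \<Rightarrow> complex) \<Rightarrow> ('a \<Rightarrow> 'a \<Rightarrow> complex) \<Rightarrow>
   (complex \<Rightarrow> 'b::ab_group_add \<Rightarrow> 'b) \<Rightarrow> ('a \<Rightarrow> 'b) \<Rightarrow>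
   ('b \<Rightarrow> 'b \<Rightarrow> complex) \<Rightarrow> ('b \<Rightarrow> 'b \<Rightarrow> complex) \<Rightarrow> bool" where
  "common_completion sc ipL ipM sc' \<iota> pL pM \<longleftrightarrow>
     vector_space sc' \<and> Vector_Spaces.linear sc sc' \<iota> \<and> inj \<iota> \<and>
     inner_product_form sc' pL \<and> inner_product_form sc' pM \<and>
     norms_equiv (form_norm pL) (form_norm pM) \<and>
     complete_wrt (form_norm pL) \<and> dense_image (form_norm pL) \<iota> \<and>
     (\<forall>x y. pL (\<iota> x) (\<iota> y) = ipL x y) \<and> (\<forall>x y. pM (\<iota> x) (\<iota> y) = ipM x y)"

definition continuous_extension ::
  "(complex \<Rightarrow> 'b::ab_group_add \<Rightarrow> 'b) \<Rightarrow> ('b \<Rightarrow> real) \<Rightarrow> ('a \<Rightarrow> 'b) \<Rightarrow> ('a \<Rightarrow> 'a) \<Rightarrow> ('b \<Rightarrow> 'b) \<Rightarrow> bool" where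
  "continuous_extension sc' N \<iota> J Je \<longleftrightarrow>
     Vector_Spaces.linear sc' sc' Je \<and> bounded_wrt N Je \<and> (\<forall>x. Je (\<iota> x) = \<iota> (J x))"

definition exp_series_to :: "(complex \<Rightarrow> 'b::ab_group_add \<Rightarrow> 'b) \<Rightarrow> ('b \<Rightarrow> real) \<Rightarrow> ('b \<Rightarrow> 'b) \<Rightarrow> 'b \<Rightarrow> 'b \<Rightarrow> bool" where
  "exp_series_to sc N Q x y \<longleftrightarrow>
     (\<lambda>n. N ((\<Sum>k<n. sc (inverse (fact k)) ((Q ^^ k) x)) - y)) \<longlonglongrightarrow> 0"

end

theory Submission
  imports Defs "HOL-Computational_Algebra.Formal_Power_Series"
begin

unbundle fps_syntax


locale hs =
  fixes sc :: "complex \<Rightarrow> 'b::ab_group_add \<Rightarrow> 'b" and p :: "'b \<Rightarrow> 'b \<Rightarrow> complex"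
  assumes vs: "vector_space sc" and ipf: "inner_product_form sc p"
begin

abbreviation N where "N \<equiv> form_norm p"

interpretation V: vector_space sc by (rule vs)

lemma p_add_r: "p x (y + z) = p x y + p x z"
  using ipf unfolding inner_product_form_def herm_sesq_def by blast
lemma p_scale_r: "p x (sc c y) = c * p x y"
  using ipf unfolding inner_product_form_def herm_sesq_def by blast
lemma p_cnj: "p y x = cnj (p x y)"
  using ipf unfolding inner_product_form_def herm_sesq_def by blast
lemma p_pos: "x \<noteq> 0 \<Longrightarrow> Re (p x x) > 0"
  using ipf unfolding inner_product_form_def by blast

lemma p_add_l: "p (x + y) z = p x z + p y z"
proof -
  have "p (x + y) z = cnj (p z (x + y))" by (rule p_cnj)
  also have "\<dots> = cnj (p z x) + cnj (p z y)" by (simp add: p_add_r)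
  also have "\<dots> = p x z + p y z" using p_cnj[of x z] p_cnj[of y z] by simp
  finally show ?thesis .
qed
lemma p_scale_l: "p (sc c x) y = cnj c * p x y"
proof -
  have "p (sc c x) y = cnj (p y (sc c x))" by (rule p_cnj)
  also have "\<dots> = cnj c * cnj (p y x)" by (simp add: p_scale_r)
  also have "\<dots> = cnj c * p x y" using p_cnj[of x y] by simp
  finally show ?thesis .
qed
lemma p_zero_r[simp]: "p x 0 = 0"
  using p_add_r[of x 0 0] by simp
lemma p_zero_l[simp]: "p 0 x = 0"
  using p_add_l[of 0 0 x] by simp
lemma p_minus_r: "p x (- y) = - p x y"
proof -
  have "p x y + p x (- y) = 0" using p_add_r[of x y "-y"] by simp
  then show ?thesis by (simp add: add_eq_0_iff)
qed
lemma p_minus_l: "p (- x) y = - p x y"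
proof -
  have "p x y + p (- x) y = 0" using p_add_l[of x "-x" y] by simp
  then show ?thesis by (simp add: add_eq_0_iff)
qed
lemma p_diff_r: "p x (y - z) = p x y - p x z"
  using p_add_r[of x y "-z"] by (simp only: diff_conv_add_uminus p_minus_r)
lemma p_diff_l: "p (x - y) z = p x z - p y z"
  using p_add_l[of x "-y" z] by (simp only: diff_conv_add_uminus p_minus_l)
lemma p_sum_r: "p w (\<Sum>k\<in>A. f k) = (\<Sum>k\<in>A. p w (f k))"
  by (induction A rule: infinite_finite_induct) (auto simp: p_add_r)

lemma p_self_real: "p x x = complex_of_real (Re (p x x))"
proof -
  have "cnj (p x x) = p x x" using p_cnj[of x x] by simp
  then show ?thesis by (metis Reals_cnj_iff of_real_Re)
qed
lemma p_self_nonneg: "Re (p x x) \<ge> 0"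
  using p_pos[of x] by (cases "x = 0") auto
lemma p_self_zero: "Re (p x x) = 0 \<longleftrightarrow> x = 0"
  using p_pos[of x] by (cases "x = 0") auto

lemma N_def': "N x = sqrt (Re (p x x))" by (simp add: form_norm_def)
lemma N_nonneg: "N x \<ge> 0" by (simp add: N_def' p_self_nonneg)
lemma N_sq: "(N x)^2 = Re (p x x)" by (simp add: N_def' p_self_nonneg)
lemma N_zero_iff: "N x = 0 \<longleftrightarrow> x = 0" by (simp add: N_def' p_self_zero p_self_nonneg)
lemma N_zero[simp]: "N 0 = 0" by (simp add: N_zero_iff)

lemma N_scale: "N (sc c x) = cmod c * N x"
proof -
  have "p (sc c x) (sc c x) = (c * cnj c) * complex_of_real (Re (p x x))"
    using p_self_real[of x] by (simp add: p_scale_l p_scale_r algebra_simps)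
  also have "\<dots> = complex_of_real ((cmod c)^2 * Re (p x x))"
    by (simp add: complex_norm_square[symmetric])
  finally have "Re (p (sc c x) (sc c x)) = (cmod c)^2 * Re (p x x)" by simp
  then show ?thesis by (simp add: N_def' real_sqrt_mult)
qed

lemma N_minus: "N (- x) = N x"
  by (simp add: N_def' p_minus_l p_minus_r)

lemma N_commute: "N (x - y) = N (y - x)"
  by (metis N_minus minus_diff_eq)

lemma CS: "cmod (p x y) \<le> N x * N y"
proof (cases "y = 0")
  case True then show ?thesis by (simp add: N_nonneg)
next
  case False
  define a where "a = Re (p y y)"
  have a: "a > 0" using p_pos[OF False] by (simp add: a_def)
  have pyy: "p y y = of_real a" unfolding a_def by (rule p_self_real)
  define q where "q = p x y"
  have c1: "p y x = cnj q" unfolding q_def by (rule p_cnj)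
  define t where "t = cnj q / of_real a"
  define z where "z = x - sc t y"
  have nq: "q * cnj q = of_real ((cmod q)^2)" by (rule complex_norm_square[symmetric])
  have ht: "t * q = of_real ((cmod q)^2 / a)"
  proof -
    have "t * q = (q * cnj q) / of_real a" by (simp add: t_def ac_simps)
    then show ?thesis unfolding nq by simp
  qed
  have "p z z = p x x - p (sc t y) x - (p x (sc t y) - p (sc t y) (sc t y))"
    by (simp only: z_def p_diff_l p_diff_r)
  also have "\<dots> = p x x - cnj t * cnj q - (t * q - t * (cnj t * of_real a))"
    by (simp only: p_scale_l p_scale_r c1 pyy q_def)
  also note ht
  also have "cnj t * cnj q = of_real ((cmod q)^2 / a)"
  proof -
    have "cnj t * cnj q = cnj (t * q)" by simp
    then show ?thesis unfolding ht by simp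
  qed
  also have "t * (cnj t * of_real a) = of_real ((cmod q)^2 / a)"
  proof -
    have "(of_real a :: complex) \<noteq> 0" using a by simp
    then have "t * (cnj t * of_real a) = (q * cnj q) / of_real a"
      unfolding t_def by (simp add: field_simps)
    then show ?thesis unfolding nq by simp
  qed
  finally have "Re (p z z) = Re (p x x) - (cmod q)^2 / a" by simp
  with p_self_nonneg[of z] have "(cmod q)^2 / a \<le> Re (p x x)" by simp
  then have "(cmod q)^2 \<le> Re (p x x) * a" using a by (simp add: field_simps)
  also have "\<dots> = (N x * N y)^2" by (simp add: N_sq a_def power_mult_distrib)
  finally have sq: "(cmod (p x y))^2 \<le> (N x * N y)^2" unfolding q_def .
  show ?thesis by (rule power2_le_imp_le[OF sq]) (simp add: N_nonneg)
qed

lemma N_expand: "(N (x + y))^2 = (N x)^2 + 2 * Re (p x y) + (N y)^2"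
proof -
  have "p (x+y) (x+y) = p x x + (p x y + cnj (p x y)) + p y y"
    by (simp add: p_add_l p_add_r p_cnj[of y x])
  then have "Re (p (x+y) (x+y)) = Re (p x x) + 2 * Re (p x y) + Re (p y y)" by simp
  then show ?thesis by (simp add: N_sq)
qed

lemma N_triangle: "N (x + y) \<le> N x + N y"
proof -
  have h: "Re (p x y) \<le> N x * N y"
    using CS[of x y] complex_Re_le_cmod[of "p x y"] by linarith
  have "(N (x + y))^2 = (N x)^2 + 2 * Re (p x y) + (N y)^2" by (rule N_expand)
  also have "\<dots> \<le> (N x + N y)^2" using h by (simp add: power2_sum)
  finally have "(N (x + y))^2 \<le> (N x + N y)^2" .
  then show ?thesis by (rule power2_le_imp_le) (simp add: N_nonneg)
qed

lemma N_triangle_diff: "N (x - z) \<le> N (x - y) + N (y - z)"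
  using N_triangle[of "x - y" "y - z"] by simp

lemma N_sum: "N (\<Sum>k\<in>A. f k) \<le> (\<Sum>k\<in>A. N (f k))"
proof (induction A rule: infinite_finite_induct)
  case (insert x F)
  then show ?case using N_triangle[of "f x" "sum f F"] by simp
qed auto

lemma weak_eq: "(\<And>w. p w y1 = p w y2) \<Longrightarrow> y1 = y2"
proof -
  assume "\<And>w. p w y1 = p w y2"
  then have "p (y1 - y2) (y1 - y2) = 0" by (simp add: p_diff_r)
  then show ?thesis using p_self_zero[of "y1 - y2"] by simp
qed

end


lemma sum_split_nat: "(m::nat) \<le> n \<Longrightarrow> sum f {..<n} = sum f {..<m} + sum f {m..<n}"
  using sum.atLeastLessThan_concat[of 0 m n f] by (simp add: atLeast0LessThan)

locale hilb = hs +
  assumes complete: "complete_wrt (form_norm p)"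
begin

lemma p_cont:
  assumes "(\<lambda>n. N (X n - y)) \<longlonglongrightarrow> 0"
  shows "(\<lambda>n. p w (X n)) \<longlonglongrightarrow> p w y"
proof (rule LIM_zero_cancel, rule tendsto_norm_zero_cancel)
  have "(\<lambda>n. N w * N (X n - y)) \<longlonglongrightarrow> N w * 0"
    by (intro tendsto_mult tendsto_const assms)
  then have t: "(\<lambda>n. N w * N (X n - y)) \<longlonglongrightarrow> 0" by simp
  show "(\<lambda>n. norm (p w (X n) - p w y)) \<longlonglongrightarrow> 0"
  proof (rule real_tendsto_sandwich[OF _ _ tendsto_const t])
    show "\<forall>\<^sub>F n in sequentially. 0 \<le> norm (p w (X n) - p w y)" by simp
    show "\<forall>\<^sub>F n in sequentially. norm (p w (X n) - p w y) \<le> N w * N (X n - y)"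
      using CS by (simp add: p_diff_r[symmetric])
  qed
qed

lemma vser:
  assumes "summable (\<lambda>k. N (z k))"
  shows "\<exists>y. (\<lambda>n. N ((\<Sum>k<n. z k) - y)) \<longlonglongrightarrow> 0"
proof -
  define S where "S n = (\<Sum>k<n. z k)" for n
  have key: "N (S m - S n) \<le> norm (\<Sum>k\<in>{m..<n}. N (z k))" if "m \<le> n" for m n
  proof -
    have "S n = S m + (\<Sum>k\<in>{m..<n}. z k)" unfolding S_def by (rule sum_split_nat[OF that])
    then have "N (S m - S n) = N (\<Sum>k\<in>{m..<n}. z k)"
      by (simp add: N_minus)
    also have "\<dots> \<le> (\<Sum>k\<in>{m..<n}. N (z k))" by (rule N_sum)
    also have "\<dots> \<le> norm (\<Sum>k\<in>{m..<n}. N (z k))" by simp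
    finally show ?thesis .
  qed
  have "\<exists>M. \<forall>m\<ge>M. \<forall>n\<ge>M. N (S m - S n) < e" if "e > 0" for e
  proof -
    from assms[unfolded summable_Cauchy] that obtain M where
      M: "\<And>m n. m \<ge> M \<Longrightarrow> norm (\<Sum>k\<in>{m..<n}. N (z k)) < e" by blast
    have "N (S m - S n) < e" if "m \<ge> M" "n \<ge> M" for m n
    proof (cases "m \<le> n")
      case True then show ?thesis using key[OF True] M[OF that(1), of n] by linarith
    next
      case False then have "n \<le> m" by simp
      then show ?thesis using key[OF \<open>n \<le> m\<close>] M[OF that(2), of m] N_commute[of "S m" "S n"] by linarith
    qed
    then show ?thesis by blast
  qed
  then obtain y where "(\<lambda>n. N (S n - y)) \<longlonglongrightarrow> 0"
    using complete unfolding complete_wrt_def by blast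
  then show ?thesis unfolding S_def by blast
qed

lemma vser_sums:
  assumes "(\<lambda>n. N ((\<Sum>k<n. z k) - y)) \<longlonglongrightarrow> 0"
  shows "(\<lambda>k. p w (z k)) sums p w y"
  unfolding sums_def using p_cont[OF assms, of w] by (simp add: p_sum_r)

end

unbundle fps_syntax


lemma nn_has_sum:
  fixes f :: "nat \<Rightarrow> real"
  assumes "\<And>n. f n \<ge> 0" "summable f"
  shows "(f has_sum suminf f) UNIV"
  using sums_nonneg_imp_has_sum[OF summable_sums[OF assms(2)]] assms(1) by blast

lemma dsum:
  fixes F :: "nat \<times> nat \<Rightarrow> complex" and G :: "nat \<Rightarrow> nat \<Rightarrow> real"
  assumes bnd: "\<And>m n. norm (F (m, n)) \<le> G m n"
    and G0: "\<And>m n. G m n \<ge> 0"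
    and Gr: "\<And>m. summable (G m)"
    and Gs: "summable (\<lambda>m. suminf (G m))"
  shows "(\<lambda>m. \<Sum>n. F (m, n)) sums infsum F UNIV"
    and "(\<lambda>n. \<Sum>m. F (m, n)) sums infsum F UNIV"
    and "(F has_sum infsum F UNIV) UNIV"
proof -
  have GG: "(\<lambda>x. norm ((\<lambda>(m,n). G m n) x)) summable_on Sigma UNIV (\<lambda>_. UNIV)"
  proof (rule Infinite_Sum.abs_summable_on_Sigma_iff[where f="\<lambda>(m,n). G m n", THEN iffD2], intro conjI ballI)
    fix m :: nat
    have "(G m has_sum suminf (G m)) UNIV" by (rule nn_has_sum[OF G0 Gr])
    then show "(\<lambda>x. norm ((\<lambda>y. (\<lambda>(m,n). G m n) (m, y)) x)) summable_on UNIV"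
      using G0 by (auto simp: has_sum_iff intro: summable_on_cong[THEN iffD1])
  next
    have eq: "infsum (\<lambda>y. norm ((\<lambda>(m,n). G m n) (m, y))) UNIV = suminf (G m)" for m
    proof -
      have "(G m has_sum suminf (G m)) UNIV" by (rule nn_has_sum[OF G0 Gr])
      then show ?thesis using G0 by (simp add: has_sum_iff)
    qed
    have "((\<lambda>m. suminf (G m)) has_sum (\<Sum>m. suminf (G m))) UNIV"
      by (rule nn_has_sum[OF _ Gs]) (simp add: G0 suminf_nonneg Gr)
    then have "(\<lambda>x. norm ((\<lambda>m. suminf (G m)) x)) summable_on UNIV"
      using G0 by (auto simp: has_sum_iff suminf_nonneg Gr)
    then show "(\<lambda>x. norm ((\<lambda>x. infsum (\<lambda>y. norm ((\<lambda>(m,n). G m n) (x, y))) UNIV) x)) summable_on UNIV"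
      unfolding eq .
  qed
  have Fa: "(\<lambda>x. norm (F x)) summable_on UNIV"
    by (rule Infinite_Sum.abs_summable_on_comparison_test[OF GG[unfolded UNIV_Times_UNIV]]) (use bnd G0 in auto)
  then show Fs: "(F has_sum infsum F UNIV) UNIV"
    using abs_summable_summable has_sum_infsum by blast
  have rowsum: "summable (\<lambda>n. norm (F (m, n)))" for m
    by (rule summable_comparison_test[OF _ Gr[of m]]) (use bnd in auto)
  have colsum: "summable (\<lambda>m. norm (F (m, n)))" for n
  proof (rule summable_comparison_test[OF _ Gs])
    have h: "G m n \<le> suminf (G m)" for m
      using sum_le_suminf[of "G m" "{n}"] Gr G0 by simp
    have "norm (norm (F (m, n))) \<le> suminf (G m)" for m
      using bnd[of m n] h[of m] by simp
    then show "\<exists>N. \<forall>m\<ge>N. norm (norm (F (m, n))) \<le> suminf (G m)"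
      by blast
  qed
  show "(\<lambda>m. \<Sum>n. F (m, n)) sums infsum F UNIV"
  proof (rule has_sum_imp_sums, rule has_sum_Sigma'[where B="\<lambda>_. UNIV"])
    show "(F has_sum infsum F UNIV) (Sigma UNIV (\<lambda>_. UNIV))" using Fs by simp
    show "((\<lambda>y. F (m, y)) has_sum (\<Sum>n. F (m, n))) UNIV" for m
      by (rule norm_summable_imp_has_sum[OF rowsum summable_sums[OF summable_norm_cancel[OF rowsum]]])
  qed
  show "(\<lambda>n. \<Sum>m. F (m, n)) sums infsum F UNIV"
  proof (rule has_sum_imp_sums, rule has_sum_Sigma'[where B="\<lambda>_. UNIV"])
    show "((\<lambda>(x,y). F (y,x)) has_sum infsum F UNIV) (Sigma UNIV (\<lambda>_. UNIV))"
      using Fs has_sum_swap[where f=F and S="infsum F UNIV" and A=UNIV and B=UNIV] by simp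
    show "((\<lambda>y. (\<lambda>(x,y). F (y,x)) (n, y)) has_sum (\<Sum>m. F (m, n))) UNIV" for n
      using norm_summable_imp_has_sum[OF colsum summable_sums[OF summable_norm_cancel[OF colsum]]]
      by simp
  qed
qed

lemma cauchy_g:
  fixes a b :: "nat \<Rightarrow> real" and g :: "nat \<Rightarrow> complex"
  assumes a0: "\<And>n. a n \<ge> 0" and b0: "\<And>n. b n \<ge> 0" and r0: "r \<ge> 0"
    and sa: "summable (\<lambda>n. a n * r^n)" and sb: "summable (\<lambda>n. b n * r^n)"
    and gb: "\<And>n. cmod (g n) \<le> B * r^n"
  shows "(\<lambda>q. of_real (\<Sum>i\<le>q. a i * b (q - i)) * g q) sums
           (\<Sum>m. of_real (a m) * (\<Sum>n. of_real (b n) * g (m + n)))"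
proof -
  have B0: "B \<ge> 0" using gb[of 0] norm_ge_zero[of "g 0"] by (simp del: norm_ge_zero)
  define F where "F x = (case x of (m, n) \<Rightarrow> of_real (a m) * (of_real (b n) * g (m + n)))" for x
  define G where "G m n = B * (a m * r^m) * (b n * r^n)" for m n
  have bnd: "norm (F (m, n)) \<le> G m n" for m n
  proof -
    have "norm (F (m, n)) = a m * (b n * cmod (g (m + n)))"
      using a0 b0 by (simp add: F_def norm_mult)
    also have "\<dots> \<le> a m * (b n * (B * r^(m+n)))"
      using a0 b0 gb by (intro mult_left_mono) auto
    also have "\<dots> = G m n" by (simp add: G_def power_add algebra_simps)
    finally show ?thesis .
  qed
  have G0: "G m n \<ge> 0" for m n using B0 a0 b0 r0 by (simp add: G_def)
  have Gr: "summable (G m)" for m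
    unfolding G_def by (intro summable_mult sb)
  have sG: "suminf (G m) = B * (a m * r^m) * (\<Sum>n. b n * r^n)" for m
    unfolding G_def by (rule suminf_mult[OF sb])
  have Gs: "summable (\<lambda>m. suminf (G m))"
    unfolding sG by (intro summable_mult2 summable_mult sa)
  note D = dsum[of F G, OF bnd G0 Gr Gs]
  define S where "S = infsum F UNIV"
  have inner: "summable (\<lambda>n. of_real (b n) * g (m + n))" for m
  proof (rule summable_norm_cancel, rule summable_comparison_test[OF _ summable_mult[OF sb, of "B * r^m"]])
    show "\<exists>N. \<forall>n\<ge>N. norm (norm (of_real (b n) * g (m + n))) \<le> B * r ^ m * (b n * r ^ n)"
    proof (intro exI allI impI)
      fix n
      have "norm (norm (of_real (b n) * g (m + n))) = b n * cmod (g (m + n))"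
        using b0 by (simp add: norm_mult)
      also have "\<dots> \<le> b n * (B * r^(m+n))" using b0 gb by (intro mult_left_mono) auto
      also have "\<dots> = B * r ^ m * (b n * r ^ n)" by (simp add: power_add algebra_simps)
      finally show "norm (norm (of_real (b n) * g (m + n))) \<le> B * r ^ m * (b n * r ^ n)" .
    qed
  qed
  have rows: "(\<Sum>n. F (m, n)) = of_real (a m) * (\<Sum>n. of_real (b n) * g (m + n))" for m
    unfolding F_def by (simp add: suminf_mult[OF inner])
  have lhs: "(\<Sum>m. of_real (a m) * (\<Sum>n. of_real (b n) * g (m + n))) = S"
    using D(1) unfolding rows S_def by (rule sums_unique[symmetric])
  define T where "T = Sigma (UNIV :: nat set) (\<lambda>q. {..q})"
  define h where "h x = (case x of (q, k) \<Rightarrow> of_real (a k) * (of_real (b (q - k)) * g q))" for x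
  have "(F has_sum S) UNIV = (h has_sum S) T"
    by (rule has_sum_reindex_bij_witness[where i="\<lambda>(q,k). (k, q - k)" and j="\<lambda>(m,n). (m+n, m)"])
       (auto simp: T_def F_def h_def)
  with D(3) have hT: "(h has_sum S) T" unfolding S_def by simp
  have "((\<lambda>q. \<Sum>k\<le>q. h (q, k)) has_sum S) UNIV"
    by (rule has_sum_Sigma'[OF hT[unfolded T_def]]) simp
  then have "(\<lambda>q. \<Sum>k\<le>q. h (q, k)) sums S" by (rule has_sum_imp_sums)
  moreover have "(\<Sum>k\<le>q. h (q, k)) = of_real (\<Sum>i\<le>q. a i * b (q - i)) * g q" for q
    by (simp add: h_def sum_distrib_right mult.assoc)
  ultimately show ?thesis unfolding lhs by simp
qed

definition Aser :: "real fps" where "Aser = Abs_fps (\<lambda>n. if odd n then 2 / of_nat n else 0)"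
definition Eser :: "real fps" where "Eser = Abs_fps (\<lambda>n. if n = 0 then 1 else 2)"

lemma fps_ode_unique:
  fixes F G B :: "real fps"
  assumes "fps_deriv F = F * B" "fps_deriv G = G * B" "F $ 0 = G $ 0"
  shows "F = G"
proof (rule fps_ext)
  fix n show "F $ n = G $ n"
  proof (induction n rule: less_induct)
    case (less n)
    show ?case
    proof (cases n)
      case 0 then show ?thesis using assms(3) by simp
    next
      case (Suc m)
      have "(F * B) $ m = (G * B) $ m"
        unfolding fps_mult_nth using less Suc by (intro sum.cong) auto
      then have "fps_deriv F $ m = fps_deriv G $ m" using assms(1,2) by simp
      then show ?thesis using Suc by (simp del: of_nat_Suc)
    qed
  qed
qed

lemma dA: "fps_deriv Aser = Abs_fps (\<lambda>n. if even n then 2 else 0)"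
  proof (rule fps_ext)
  fix n
  have "real (n+1) \<noteq> 0" by simp
  then show "fps_deriv Aser $ n = Abs_fps (\<lambda>n. if even n then 2 else 0) $ n"
    by (auto simp: Aser_def simp del: of_nat_Suc of_nat_add)
qed

lemma oneX_E: "(1 - fps_X) * Eser = 1 + fps_X"
  by (rule fps_ext) (auto simp: Eser_def algebra_simps fps_X_mult_nth)

lemma oneX2_dA: "(1 - fps_X * fps_X) * fps_deriv Aser = 2"
proof (rule fps_ext)
  fix n
  show "((1 - fps_X * fps_X) * fps_deriv Aser) $ n = (2::real fps) $ n"
    by (cases n; cases "n - 1") (auto simp: dA algebra_simps fps_X_mult_nth numeral_fps_const)
qed

lemma oneX2_dE: "(1 - fps_X) * ((1 - fps_X) * fps_deriv Eser) = 2"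
proof -
  have "(1 - fps_X) * fps_deriv Eser = Abs_fps (\<lambda>n. 2)"
    by (rule fps_ext) (auto simp: Eser_def algebra_simps fps_X_mult_nth)
  moreover have "(1 - fps_X) * Abs_fps (\<lambda>n. 2) = (2::real fps)"
    by (rule fps_ext) (auto simp: algebra_simps fps_X_mult_nth numeral_fps_const)
  ultimately show ?thesis by simp
qed

lemma dE: "fps_deriv Eser = Eser * fps_deriv Aser"
proof -
  let ?P = "(1 - fps_X) * ((1 - fps_X) * (1 + fps_X)) :: real fps"
  have "?P * fps_deriv Eser = (1 + fps_X) * 2"
  proof -
    have "?P * fps_deriv Eser = (1 + fps_X) * ((1 - fps_X) * ((1 - fps_X) * fps_deriv Eser))"
      by (simp only: ac_simps)
    then show ?thesis using oneX2_dE by simp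
  qed
  moreover have "?P * (Eser * fps_deriv Aser) = (1 + fps_X) * 2"
  proof -
    have "?P * (Eser * fps_deriv Aser) = ((1 - fps_X) * Eser) * ((1 - fps_X * fps_X) * fps_deriv Aser)"
      by (simp add: algebra_simps)
    then show ?thesis using oneX_E oneX2_dA by simp
  qed
  moreover have "?P \<noteq> 0"
  proof
    assume "?P = 0" then have "?P $ 0 = 0" by simp
    then show False by (simp add: fps_mult_nth)
  qed
  ultimately show ?thesis by (metis mult_left_cancel)
qed

lemma exp_A: "fps_exp 1 oo Aser = Eser"
proof (rule fps_ode_unique[where B="fps_deriv Aser"])
  have "Aser $ 0 = 0" by (simp add: Aser_def)
  then show "fps_deriv (fps_exp 1 oo Aser) = (fps_exp 1 oo Aser) * fps_deriv Aser"
    by (simp add: fps_compose_deriv)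
  show "fps_deriv Eser = Eser * fps_deriv Aser" by (rule dE)
  show "(fps_exp 1 oo Aser) $ 0 = Eser $ 0" by (simp add: Eser_def)
qed


lemma exp_swap:
  fixes c :: "nat \<Rightarrow> nat \<Rightarrow> real" and g :: "nat \<Rightarrow> complex"
  assumes c0: "\<And>k n. c k n \<ge> 0" and cz: "\<And>k n. n < k \<Longrightarrow> c k n = 0"
    and cs: "\<And>k. (\<lambda>n. c k n * r^n) sums (\<alpha>^k)" and r0: "r \<ge> 0"
    and gb: "\<And>n. cmod (g n) \<le> B * r^n"
  shows "\<exists>S. (\<lambda>k. of_real (1 / fact k) * (\<Sum>n. of_real (c k n) * g n)) sums S \<and>
             (\<lambda>n. of_real (\<Sum>k\<le>n. c k n / fact k) * g n) sums S"
proof -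
  have B0: "B \<ge> 0" using gb[of 0] norm_ge_zero[of "g 0"] by (simp del: norm_ge_zero)
  define F where "F x = (case x of (k, n) \<Rightarrow> of_real (1 / fact k) * (of_real (c k n) * g n))" for x
  define G where "G k n = B * (c k n * r^n) / fact k" for k n
  have bnd: "norm (F (k, n)) \<le> G k n" for k n
  proof -
    have "norm (F (k, n)) = c k n * cmod (g n) / fact k"
      using c0 by (simp add: F_def norm_mult norm_divide)
    also have "\<dots> \<le> c k n * (B * r^n) / fact k"
      using c0 gb by (intro divide_right_mono mult_left_mono) auto
    also have "\<dots> = G k n" by (simp add: G_def algebra_simps)
    finally show ?thesis .
  qed
  have G0: "G k n \<ge> 0" for k n using B0 c0 r0 by (simp add: G_def)
  have Gr: "summable (G k)" for k
    unfolding G_def using cs[of k] by (intro summable_divide summable_mult) (simp add: sums_iff)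
  have sG: "suminf (G k) = B * \<alpha>^k / fact k" for k
    unfolding G_def using cs[of k] by (simp add: suminf_divide suminf_mult sums_iff)
  have Gs: "summable (\<lambda>k. suminf (G k))"
  proof -
    have e: "(\<lambda>k. suminf (G k)) = (\<lambda>k. B * (inverse (fact k) * \<alpha>^k))"
      by (rule ext) (simp add: sG divide_inverse ac_simps)
    show ?thesis unfolding e by (intro summable_mult summable_exp)
  qed
  note D = dsum[of F G, OF bnd G0 Gr Gs]
  have inner: "summable (\<lambda>n. of_real (c k n) * g n)" for k
  proof (rule summable_norm_cancel, rule summable_comparison_test[OF _ summable_mult[where c=B, OF cs[of k, THEN sums_summable]]])
    show "\<exists>N. \<forall>n\<ge>N. norm (norm (of_real (c k n) * g n)) \<le> B * (c k n * r ^ n)"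
    proof (intro exI allI impI)
      fix n
      have "norm (norm (of_real (c k n) * g n)) = c k n * cmod (g n)"
        using c0 by (simp add: norm_mult)
      also have "\<dots> \<le> c k n * (B * r^n)" using c0 gb by (intro mult_left_mono) auto
      finally show "norm (norm (of_real (c k n) * g n)) \<le> B * (c k n * r ^ n)" by (simp add: algebra_simps)
    qed
  qed
  have rows: "(\<Sum>n. F (k, n)) = of_real (1 / fact k) * (\<Sum>n. of_real (c k n) * g n)" for k
    unfolding F_def by (simp add: suminf_divide[OF inner])
  have cols: "(\<Sum>k. F (k, n)) = of_real (\<Sum>k\<le>n. c k n / fact k) * g n" for n
  proof -
    have "(\<Sum>k. F (k, n)) = (\<Sum>k\<le>n. F (k, n))"
      by (rule suminf_finite) (auto simp: F_def cz)
    also have "\<dots> = of_real (\<Sum>k\<le>n. c k n / fact k) * g n"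
      by (simp add: F_def sum_distrib_right)
    finally show ?thesis .
  qed
  show ?thesis using D(1,2) unfolding rows cols by blast
qed

lemma pow_sums:
  fixes A :: "real fps"
  assumes A0: "\<And>n. A $ n \<ge> 0" and r0: "r \<ge> 0" and sA: "summable (\<lambda>n. A $ n * r^n)"
  shows "(\<lambda>n. (A^k) $ n * r^n) sums (\<Sum>n. A $ n * r^n)^k \<and> (\<forall>n. (A^k) $ n \<ge> 0)"
proof (induction k)
  case 0
  have "(\<lambda>n. (1::real fps) $ n * r^n) = (\<lambda>n. if n = 0 then 1 else 0)" by auto
  then show ?case using sums_single[of 0 "\<lambda>_. 1::real"] by auto
next
  case (Suc k)
  have "(\<lambda>n. \<Sum>i\<le>n. (A $ i * r^i) * ((A^k) $ (n - i) * r^(n - i))) sums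
          ((\<Sum>n. A $ n * r^n) * (\<Sum>n. (A^k) $ n * r^n))"
    by (rule Cauchy_product_sums) (use A0 r0 Suc sA in \<open>auto simp: sums_iff\<close>)
  moreover have "(\<Sum>i\<le>n. (A $ i * r^i) * ((A^k) $ (n - i) * r^(n - i))) = (A^Suc k) $ n * r^n" for n
  proof -
    have e: "(A $ i * r^i) * ((A^k) $ (n - i) * r^(n - i)) = (A $ i * (A^k) $ (n - i)) * r^n"
      if "i \<in> {..n}" for i
    proof -
      have "(A $ i * r^i) * ((A^k) $ (n - i) * r^(n - i)) = (A $ i * (A^k) $ (n - i)) * (r^i * r^(n - i))"
        by (simp only: ac_simps)
      also have "r^i * r^(n - i) = r^n" using that by (simp add: power_add[symmetric])
      finally show ?thesis .
    qed
    show ?thesis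
      by (simp only: sum.cong[OF refl e] sum_distrib_right[symmetric] power_Suc fps_mult_nth atLeast0AtMost)
  qed
  moreover have "(\<Sum>n. (A^k) $ n * r^n) = (\<Sum>n. A $ n * r^n)^k" using Suc sums_unique by metis
  moreover have "(A^Suc k) $ n \<ge> 0" for n
    using Suc A0 by (simp add: fps_mult_nth sum_nonneg)
  ultimately show ?case by simp
qed

lemma pow_zero:
  fixes A :: "real fps"
  assumes "A $ 0 = 0"
  shows "n < k \<Longrightarrow> (A^k) $ n = 0"
proof (induction k arbitrary: n)
  case (Suc k)
  have "(A * A^k) $ n = 0" unfolding fps_mult_nth
  proof (rule sum.neutral, intro ballI)
    fix i assume "i \<in> {0..n}"
    then show "A $ i * (A ^ k) $ (n - i) = 0"
      using Suc assms by (cases i) auto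
  qed
  then show ?case by simp
qed simp


context hilb begin

interpretation V: vector_space sc by (rule vs)

definition lin where
  "lin T \<longleftrightarrow> (\<forall>x y. T (x + y) = T x + T y) \<and> (\<forall>c x. T (sc c x) = sc c (T x))"
definition bnd where
  "bnd T r \<longleftrightarrow> r \<ge> 0 \<and> (\<forall>x. N (T x) \<le> r * N x)"
definition sadj where
  "sadj T \<longleftrightarrow> (\<forall>x y. p (T x) y = p x (T y))"

lemma lin_add: "lin T \<Longrightarrow> T (x + y) = T x + T y" by (simp add: lin_def)
lemma lin_scale: "lin T \<Longrightarrow> T (sc c x) = sc c (T x)" by (simp add: lin_def)
lemma lin_zero: "lin T \<Longrightarrow> T 0 = 0"
  using lin_add[of T 0 0] by simp
lemma lin_minus: "lin T \<Longrightarrow> T (- x) = - T x"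
proof -
  assume l: "lin T"
  have "T x + T (- x) = 0" using lin_add[OF l, of x "-x"] lin_zero[OF l] by simp
  then show ?thesis by (simp add: add_eq_0_iff)
qed
lemma lin_diff: "lin T \<Longrightarrow> T (x - y) = T x - T y"
  using lin_add[of T x "-y"] lin_minus[of T y] by simp
lemma lin_sum: "lin T \<Longrightarrow> T (\<Sum>k\<in>A. f k) = (\<Sum>k\<in>A. T (f k))"
  by (induction A rule: infinite_finite_induct) (auto simp: lin_add lin_zero)

lemma lin_pow: "lin T \<Longrightarrow> lin (T ^^ n)"
  by (induction n) (auto simp: lin_def)

lemma bnd_N: "bnd T r \<Longrightarrow> N (T x) \<le> r * N x" by (simp add: bnd_def)
lemma bnd_r: "bnd T r \<Longrightarrow> r \<ge> 0" by (simp add: bnd_def)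

lemma bnd_pow: "bnd T r \<Longrightarrow> N ((T ^^ n) x) \<le> r ^ n * N x"
proof (induction n)
  case (Suc n)
  have "N ((T ^^ Suc n) x) \<le> r * N ((T ^^ n) x)" using bnd_N[OF Suc.prems] by simp
  also have "\<dots> \<le> r * (r ^ n * N x)" using Suc bnd_r[OF Suc.prems] by (simp add: mult_left_mono)
  finally show ?case by simp
qed simp

lemma sadj_D: "sadj T \<Longrightarrow> p (T x) y = p x (T y)" by (simp add: sadj_def)

lemma sadj_pow: "sadj T \<Longrightarrow> p ((T ^^ n) x) y = p x ((T ^^ n) y)"
proof (induction n arbitrary: x y)
  case (Suc n)
  have "p ((T ^^ Suc n) x) y = p ((T ^^ n) x) (T y)" using sadj_D[OF Suc.prems] by simp
  also have "\<dots> = p x ((T ^^ n) (T y))" using Suc by simp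
  also have "(T ^^ n) (T y) = (T ^^ Suc n) y" by (simp add: funpow_swap1)
  finally show ?case .
qed simp

lemma pow_comm: "(\<And>x. S (T x) = T (S x)) \<Longrightarrow> S ((T ^^ n) x) = (T ^^ n) (S x)"
  by (induction n) auto

lemma weak_sums_unique:
  assumes "\<And>w. f w sums p w y1" "\<And>w. f w sums p w y2"
  shows "y1 = y2"
  using assms sums_unique2 by (intro weak_eq) blast

definition opser :: "(nat \<Rightarrow> complex) \<Rightarrow> ('a \<Rightarrow> 'a) \<Rightarrow> 'a \<Rightarrow> 'a" where
  "opser a T x = (SOME y. \<forall>w. (\<lambda>n. a n * p w ((T ^^ n) x)) sums p w y)"

lemma opser_sums:
  assumes T: "bnd T r" and sa: "summable (\<lambda>n. cmod (a n) * r ^ n)"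
  shows "(\<lambda>n. a n * p w ((T ^^ n) x)) sums p w (opser a T x)"
proof -
  define z where "z n = sc (a n) ((T ^^ n) x)" for n
  have "summable (\<lambda>n. N (z n))"
  proof (rule summable_comparison_test[OF _ summable_mult2[OF sa, of "N x"]])
    show "\<exists>M. \<forall>n\<ge>M. norm (N (z n)) \<le> cmod (a n) * r ^ n * N x"
      using bnd_pow[OF T] by (auto simp: z_def N_scale N_nonneg mult.assoc intro!: mult_left_mono)
  qed
  from vser[OF this] obtain y where y: "(\<lambda>n. N ((\<Sum>k<n. z k) - y)) \<longlonglongrightarrow> 0" by blast
  have "\<forall>w. (\<lambda>n. a n * p w ((T ^^ n) x)) sums p w y"
    using vser_sums[OF y] by (simp add: z_def p_scale_r)
  then have "\<forall>w. (\<lambda>n. a n * p w ((T ^^ n) x)) sums p w (opser a T x)"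
    unfolding opser_def by (rule someI)
  then show ?thesis by blast
qed

lemma opser_eq:
  assumes T: "bnd T r" and sa: "summable (\<lambda>n. cmod (a n) * r ^ n)"
    and "\<And>w. (\<lambda>n. a n * p w ((T ^^ n) x)) sums p w y"
  shows "opser a T x = y"
  using weak_sums_unique[OF opser_sums[OF T sa] assms(3)] .

lemma opser_bound:
  assumes T: "bnd T r" and sa: "summable (\<lambda>n. cmod (a n) * r ^ n)"
  shows "N (opser a T x) \<le> (\<Sum>n. cmod (a n) * r ^ n) * N x"
proof -
  define y where "y = opser a T x"
  define \<alpha> where "\<alpha> = (\<Sum>n. cmod (a n) * r ^ n)"
  have s: "(\<lambda>n. a n * p y ((T ^^ n) x)) sums p y y"
    unfolding y_def by (rule opser_sums[OF T sa])
  have b: "norm (a n * p y ((T ^^ n) x)) \<le> cmod (a n) * r ^ n * (N y * N x)" for n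
  proof -
    have "norm (a n * p y ((T ^^ n) x)) \<le> cmod (a n) * (N y * (r ^ n * N x))"
      unfolding norm_mult
      by (intro mult_left_mono order_trans[OF CS] mult_left_mono bnd_pow[OF T]) (auto simp: N_nonneg)
    then show ?thesis by (simp add: algebra_simps)
  qed
  have sb: "summable (\<lambda>n. cmod (a n) * r ^ n * (N y * N x))" by (rule summable_mult2[OF sa])
  have sn: "summable (\<lambda>n. norm (a n * p y ((T ^^ n) x)))"
    by (rule summable_comparison_test[OF _ sb]) (use b in auto)
  have "(N y)^2 \<le> cmod (p y y)" by (simp add: N_sq complex_Re_le_cmod)
  also have "cmod (p y y) \<le> (\<Sum>n. norm (a n * p y ((T ^^ n) x)))"
    using summable_norm[OF sn] s by (simp add: sums_iff)
  also have "\<dots> \<le> (\<Sum>n. cmod (a n) * r ^ n * (N y * N x))"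
    by (rule suminf_le[OF b sn sb])
  also have "\<dots> = \<alpha> * (N y * N x)" unfolding \<alpha>_def by (rule suminf_mult2[OF sa, symmetric])
  finally have "N y * N y \<le> N y * (\<alpha> * N x)" by (simp add: power2_eq_square algebra_simps)
  moreover have "\<alpha> \<ge> 0" unfolding \<alpha>_def using sa by (intro suminf_nonneg) (auto simp: bnd_r[OF T])
  ultimately have "N y \<le> \<alpha> * N x"
    using N_nonneg[of y] N_nonneg[of x]
    by (cases "N y = 0") (auto simp: mult_le_cancel_left)
  then show ?thesis unfolding y_def \<alpha>_def .
qed

end


context hilb begin

lemma opser_lin:
  assumes T: "bnd T r" and sa: "summable (\<lambda>n. cmod (a n) * r ^ n)" and l: "lin T"
  shows "lin (opser a T)"
  unfolding lin_def
proof (intro conjI allI)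
  fix x y
  show "opser a T (x + y) = opser a T x + opser a T y"
  proof (rule opser_eq[OF T sa])
    fix w
    have "(\<lambda>n. a n * p w ((T ^^ n) x) + a n * p w ((T ^^ n) y)) sums (p w (opser a T x) + p w (opser a T y))"
      by (intro sums_add opser_sums[OF T sa])
    then show "(\<lambda>n. a n * p w ((T ^^ n) (x + y))) sums p w (opser a T x + opser a T y)"
      by (simp add: lin_add[OF lin_pow[OF l]] p_add_r algebra_simps)
  qed
next
  fix c x
  show "opser a T (sc c x) = sc c (opser a T x)"
  proof (rule opser_eq[OF T sa])
    fix w
    have "(\<lambda>n. c * (a n * p w ((T ^^ n) x))) sums (c * p w (opser a T x))"
      by (intro sums_mult opser_sums[OF T sa])
    then show "(\<lambda>n. a n * p w ((T ^^ n) (sc c x))) sums p w (sc c (opser a T x))"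
      by (simp add: lin_scale[OF lin_pow[OF l]] p_scale_r algebra_simps)
  qed
qed

lemma opser_sadj:
  assumes T: "bnd T r" and sa: "summable (\<lambda>n. cmod (a n) * r ^ n)" and s: "sadj T"
    and real: "\<And>n. cnj (a n) = a n"
  shows "sadj (opser a T)"
  unfolding sadj_def
proof (intro allI)
  fix x y
  have "(\<lambda>n. a n * p y ((T ^^ n) x)) sums p y (opser a T x)" by (rule opser_sums[OF T sa])
  then have "(\<lambda>n. cnj (a n * p y ((T ^^ n) x))) sums cnj (p y (opser a T x))"
    by (simp only: sums_cnj)
  then have "(\<lambda>n. a n * p x ((T ^^ n) y)) sums p (opser a T x) y"
    using real by (simp add: p_cnj[of y] sadj_pow[OF s])
  moreover have "(\<lambda>n. a n * p x ((T ^^ n) y)) sums p x (opser a T y)" by (rule opser_sums[OF T sa])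
  ultimately show "p (opser a T x) y = p x (opser a T y)" using sums_unique2 by blast
qed

lemma opser_comm:
  assumes T: "bnd T r" and sa: "summable (\<lambda>n. cmod (a n) * r ^ n)" and s: "sadj S"
    and c: "\<And>x. S (T x) = T (S x)"
  shows "S (opser a T x) = opser a T (S x)"
proof (rule weak_eq)
  fix w
  have "(\<lambda>n. a n * p (S w) ((T ^^ n) x)) sums p (S w) (opser a T x)" by (rule opser_sums[OF T sa])
  moreover have "(\<lambda>n. a n * p w ((T ^^ n) (S x))) sums p w (opser a T (S x))" by (rule opser_sums[OF T sa])
  moreover have "p (S w) ((T ^^ n) x) = p w ((T ^^ n) (S x))" for n
    using sadj_D[OF s] pow_comm[of S T, OF c] by simp
  ultimately show "p w (S (opser a T x)) = p w (opser a T (S x))"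
    using sums_unique2 sadj_D[OF s] by fastforce
qed

end


locale constr = hilb +
  fixes U Ui :: "'a \<Rightarrow> 'a" and m MU :: real
  assumes linU: "lin U" and linUi: "lin Ui" and UUi: "\<And>x. U (Ui x) = x" and UiU: "\<And>x. Ui (U x) = x"
    and sadjU: "sadj U" and bndU: "bnd U MU" and posU: "\<And>x. Re (p (U x) x) \<ge> m * (N x)^2"
    and m0: "m > 0"
begin

interpretation V: vector_space sc by (rule vs)

definition V where "V x = U x + x"

lemma MU0: "MU \<ge> 0" using bndU by (simp add: bnd_def)

lemma linV: "lin V"
  using linU unfolding lin_def V_def by (simp add: V.scale_right_distrib algebra_simps)

lemma sadjV: "sadj V"
  using sadjU unfolding sadj_def V_def by (simp add: p_add_l p_add_r)

lemma V_pos: "Re (p (V x) x) \<ge> (N x)^2"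
proof -
  have "Re (p (V x) x) = Re (p (U x) x) + (N x)^2" by (simp add: V_def p_add_l N_sq)
  moreover have "m * (N x)^2 \<ge> 0" using m0 by simp
  ultimately show ?thesis using posU[of x] by linarith
qed

lemma V_N: "N (V x) \<le> (MU + 1) * N x"
  using N_triangle[of "U x" x] bnd_N[OF bndU, of x] by (simp add: V_def algebra_simps)

lemma V_inj: "V x = V y \<Longrightarrow> x = y"
proof -
  assume "V x = V y"
  then have "V (x - y) = 0" using lin_diff[OF linV] by simp
  then have "(N (x - y))^2 \<le> 0" using V_pos[of "x - y"] by simp
  then have "N (x - y) = 0" by simp
  then show ?thesis by (simp add: N_zero_iff)
qed

definition dW where "dW = (MU + 1)^2"
definition W where "W x = x - sc (of_real (1 / dW)) (V x)"
definition rW where "rW = sqrt (1 - 1 / dW)"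

lemma dW1: "dW \<ge> 1"
proof -
  have "MU + 1 \<ge> 1" using MU0 by simp
  then have "(MU + 1) * (MU + 1) \<ge> 1 * 1" by (intro mult_mono) auto
  then show ?thesis by (simp add: dW_def power2_eq_square)
qed

lemma rW: "0 \<le> rW" "rW < 1"
  using dW1 by (auto simp: rW_def)

lemma linW: "lin W"
  using linV unfolding lin_def W_def by (simp add: V.scale_right_distrib V.scale_right_diff_distrib algebra_simps V.scale_left_commute)

lemma sadjW: "sadj W"
  using sadjV unfolding sadj_def W_def by (simp add: p_diff_l p_diff_r p_scale_l p_scale_r)

lemma W_N2: "(N (W x))^2 \<le> (1 - 1 / dW) * (N x)^2"
proof -
  define c where "c = 1 / dW"
  have c0: "c > 0" using dW1 by (simp add: c_def)
  have "W x = x + - sc (of_real c) (V x)" by (simp add: W_def c_def)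
  then have "(N (W x))^2 = (N x)^2 + 2 * Re (p x (- sc (of_real c) (V x))) + (N (- sc (of_real c) (V x)))^2"
    using N_expand[of x "- sc (of_real c) (V x)"] by simp
  also have "Re (p x (- sc (of_real c) (V x))) = - c * Re (p (V x) x)"
    by (simp add: p_minus_r p_scale_r p_cnj[of x "V x"])
  also have "(N (- sc (of_real c) (V x)))^2 = c^2 * (N (V x))^2"
    using c0 by (simp add: N_minus N_scale power_mult_distrib)
  finally have e: "(N (W x))^2 = (N x)^2 - 2 * c * Re (p (V x) x) + c^2 * (N (V x))^2" by simp
  have "(N (V x))^2 \<le> ((MU + 1) * N x)^2"
    using V_N[of x] N_nonneg[of "V x"] by (intro power_mono) auto
  then have "c^2 * (N (V x))^2 \<le> c^2 * (dW * (N x)^2)"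
    by (intro mult_left_mono) (auto simp: dW_def power_mult_distrib)
  also have "\<dots> = c * (N x)^2" using dW1 by (simp add: c_def power2_eq_square)
  finally have a: "c^2 * (N (V x))^2 \<le> c * (N x)^2" .
  have b: "2 * c * Re (p (V x) x) \<ge> 2 * c * (N x)^2" using V_pos[of x] c0 by simp
  have "(N (W x))^2 \<le> (N x)^2 - 2 * c * (N x)^2 + c * (N x)^2" using e a b by linarith
  then show ?thesis by (simp add: c_def algebra_simps)
qed

lemma bndW: "bnd W rW"
  unfolding bnd_def
proof (intro conjI allI)
  show "0 \<le> rW" by (rule rW(1))
  fix x
  have "(N (W x))^2 \<le> (rW * N x)^2"
    using W_N2[of x] dW1 by (simp add: rW_def power_mult_distrib)
  then show "N (W x) \<le> rW * N x"
    by (rule power2_le_imp_le) (simp add: rW(1) N_nonneg)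
qed

definition R0 where "R0 = opser (\<lambda>_. 1) W"

lemma sumW: "summable (\<lambda>n. cmod ((\<lambda>_. 1::complex) n) * rW ^ n)"
  using rW by simp

lemma R0_eq: "R0 x - W (R0 x) = x"
proof (rule weak_eq)
  fix w
  define g where "g n = p w ((W ^^ n) x)" for n
  have s1: "g sums p w (R0 x)"
    using opser_sums[OF bndW sumW, of w x] unfolding R0_def g_def by simp
  have s2: "(\<lambda>n. g (Suc n)) sums p (W w) (R0 x)"
    using opser_sums[OF bndW sumW, of "W w" x] unfolding R0_def g_def
    by (simp add: sadj_D[OF sadjW, of w])
  have "(\<lambda>n. g (Suc n)) sums (p w (R0 x) - g 0)"
    using s1 sums_Suc_iff[of g "p w (R0 x) - g 0"] by simp
  with s2 have "p (W w) (R0 x) = p w (R0 x) - g 0" using sums_unique2 by blast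
  then show "p w (R0 x - W (R0 x)) = p w x"
    by (simp add: p_diff_r sadj_D[OF sadjW, symmetric] g_def)
qed

definition R where "R x = sc (of_real (1 / dW)) (R0 x)"

lemma VR: "V (R x) = x"
proof -
  have "V (R x) = sc (of_real (1 / dW)) (V (R0 x))" unfolding R_def by (rule lin_scale[OF linV])
  also have "\<dots> = R0 x - W (R0 x)" by (simp add: W_def)
  finally show ?thesis using R0_eq by simp
qed

lemma RV: "R (V x) = x" using VR[of "V x"] V_inj by blast

lemma linR: "lin R"
  unfolding lin_def
proof (intro conjI allI)
  fix x y
  have "V (R x + R y) = V (R (x + y))" by (simp add: lin_add[OF linV] VR)
  then show "R (x + y) = R x + R y" using V_inj by metis
next
  fix c x
  have "V (sc c (R x)) = V (R (sc c x))" by (simp add: lin_scale[OF linV] VR)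
  then show "R (sc c x) = sc c (R x)" using V_inj by metis
qed

lemma sadjR: "sadj R"
  unfolding sadj_def
proof (intro allI)
  fix x y
  have "p (R x) y = p (R x) (V (R y))" by (simp add: VR)
  also have "\<dots> = p (V (R x)) (R y)" by (simp add: sadj_D[OF sadjV])
  finally show "p (R x) y = p x (R y)" by (simp add: VR)
qed

lemma bndR: "bnd R 1"
  unfolding bnd_def
proof (intro conjI allI)
  fix x
  have "(N (R x))^2 \<le> Re (p (V (R x)) (R x))" by (rule V_pos)
  also have "\<dots> \<le> cmod (p x (R x))" by (simp add: VR complex_Re_le_cmod)
  also have "\<dots> \<le> N x * N (R x)" by (rule CS)
  finally have "N (R x) * N (R x) \<le> N x * N (R x)" by (simp add: power2_eq_square)
  then show "N (R x) \<le> 1 * N x"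
    using N_nonneg[of "R x"] by (cases "N (R x) = 0") (auto simp: N_nonneg mult_le_cancel_right)
qed simp

lemma VU: "V (U x) = U (V x)" by (simp add: V_def lin_add[OF linU])

lemma UR: "U (R x) = R (U x)"
proof -
  have "V (U (R x)) = U x" by (simp add: VU VR)
  then have "R (V (U (R x))) = R (U x)" by simp
  then show ?thesis by (simp add: RV)
qed

definition K where "K x = U (R x) - R x"

lemma linK: "lin K"
  using linU linR unfolding lin_def K_def by (simp add: V.scale_right_diff_distrib algebra_simps)

lemma sadjK: "sadj K"
  unfolding sadj_def K_def
  by (simp add: p_diff_l p_diff_r sadj_D[OF sadjU] sadj_D[OF sadjR] UR)

lemma UK: "U (K x) = K (U x)"
  by (simp add: K_def lin_diff[OF linU] UR)

lemma JK:
  assumes lJ: "lin J" and JU: "\<And>x. J (U x) = Ui (J x)"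
  shows "J (K x) = - K (J x)"
proof -
  define y where "y = R x"
  define z where "z = R (J x)"
  have Jx: "J x = Ui (J y) + J y"
    using VR[of x] by (metis V_def JU lin_add[OF lJ] y_def)
  have "V (U z) = U (V z)" by (rule VU)
  also have "V z = J x" by (simp add: z_def VR)
  also note Jx
  also have "U (Ui (J y) + J y) = V (J y)" by (simp add: lin_add[OF linU] UUi V_def add.commute)
  finally have "U z = J y" using V_inj Jx by metis
  then have "J (K x) = Ui (U z) - U z"
    by (simp add: K_def y_def[symmetric] lin_diff[OF lJ] JU)
  also have "\<dots> = - K (J x)" by (simp add: UiU K_def z_def[symmetric])
  finally show ?thesis .
qed

definition \<delta> where "\<delta> = m / (MU^2 + 1 + m)"
definition \<rho> where "\<rho> = sqrt (1 - \<delta>)"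

lemma \<delta>: "0 < \<delta>" "\<delta> < 1" "\<delta> * (MU^2 + 1) \<le> m"
proof -
  have "MU^2 \<ge> 0" by simp
  then have d: "MU^2 + 1 + m > 0" using m0 by linarith
  show "0 < \<delta>" using m0 d by (simp add: \<delta>_def)
  have d1: "MU^2 + 1 > 0" using \<open>MU^2 \<ge> 0\<close> by linarith
  show "\<delta> < 1" using m0 d d1 by (simp add: \<delta>_def)
  have "\<delta> * (MU^2 + 1) = m * ((MU^2 + 1) / (MU^2 + 1 + m))" by (simp add: \<delta>_def)
  also have "\<dots> \<le> m * 1" using m0 d by (intro mult_left_mono) auto
  finally show "\<delta> * (MU^2 + 1) \<le> m" by simp
qed

lemma \<rho>: "0 \<le> \<rho>" "\<rho> < 1" using \<delta> by (auto simp: \<rho>_def)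

lemma bndK: "bnd K \<rho>"
  unfolding bnd_def
proof (intro conjI allI)
  show "0 \<le> \<rho>" by (rule \<rho>(1))
  fix x
  define y where "y = R x"
  have x: "x = U y + y" using VR[of x] by (simp add: V_def y_def)
  have Kx: "K x = U y + - y" by (simp add: K_def y_def)
  define t where "t = Re (p (U y) y)"
  define s where "s = (N (U y))^2 + (N y)^2"
  have eK: "(N (K x))^2 = s - 2 * t"
    unfolding Kx using N_expand[of "U y" "-y"] by (simp add: s_def t_def p_minus_r N_minus)
  have ex: "(N x)^2 = s + 2 * t"
    unfolding x using N_expand[of "U y" y] by (simp add: s_def t_def)
  have t0: "t \<ge> m * (N y)^2" unfolding t_def by (rule posU)
  have "(N (U y))^2 \<le> (MU * N y)^2"
    using bnd_N[OF bndU, of y] N_nonneg[of "U y"] by (intro power_mono) auto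
  then have "s \<le> (MU^2 + 1) * (N y)^2" by (simp add: s_def power_mult_distrib algebra_simps)
  then have "\<delta> * s \<le> \<delta> * ((MU^2 + 1) * (N y)^2)" using \<delta> by (intro mult_left_mono) auto
  also have "\<dots> \<le> m * (N y)^2" using \<delta>(3) by (simp add: mult.assoc[symmetric] mult_right_mono)
  finally have ds: "\<delta> * s \<le> t" using t0 by linarith
  have tpos: "t \<ge> 0" using t0 m0 by (smt (verit) mult_nonneg_nonneg zero_le_power2)
  have dt: "\<delta> * t \<le> t" using mult_right_mono[of \<delta> 1 t] tpos \<delta>(2) by simp
  have "(1 - \<delta>) * (s + 2 * t) = s + 2 * t - \<delta> * s - 2 * (\<delta> * t)" by (simp add: algebra_simps)
  then have "(N (K x))^2 \<le> (1 - \<delta>) * (N x)^2"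
    unfolding eK ex using ds dt tpos by linarith
  then have "(N (K x))^2 \<le> (\<rho> * N x)^2"
    using \<delta> by (simp add: \<rho>_def power_mult_distrib)
  then show "N (K x) \<le> \<rho> * N x"
    by (rule power2_le_imp_le) (simp add: \<rho>(1) N_nonneg)
qed

end


unbundle fps_syntax

context constr begin

interpretation V: vector_space sc by (rule vs)

lemma Aser_nth: "Aser $ n = (if odd n then 2 / of_nat n else 0)" by (simp add: Aser_def)
lemma Aser_nonneg: "Aser $ n \<ge> 0" by (simp add: Aser_nth)
lemma Aser_le: "Aser $ n \<le> 2"
proof (cases "odd n")
  case True then have "n \<ge> 1" by (cases n) auto
  then show ?thesis using True by (simp add: Aser_nth field_simps)
qed (simp add: Aser_nth)
lemma Eser_nth: "Eser $ n = (if n = 0 then 1 else 2)" by (simp add: Eser_def)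

definition aA where "aA n = complex_of_real (Aser $ n)"
definition eE where "eE n = complex_of_real (Eser $ n)"

lemma sum_geo2: "summable (\<lambda>n. 2 * \<rho> ^ n)" using \<rho> by (intro summable_mult) simp

lemma sumA: "summable (\<lambda>n. cmod (aA n) * \<rho> ^ n)"
  by (rule summable_comparison_test[OF _ sum_geo2])
     (use \<rho> Aser_nonneg Aser_le in \<open>auto simp: aA_def intro!: mult_right_mono\<close>)

lemma sumA': "summable (\<lambda>n. Aser $ n * \<rho> ^ n)"
  using sumA by (simp add: aA_def Aser_nonneg)

lemma sumE: "summable (\<lambda>n. cmod (eE n) * \<rho> ^ n)"
  by (rule summable_comparison_test[OF _ sum_geo2])
     (use \<rho> in \<open>auto simp: eE_def Eser_nth intro!: mult_right_mono\<close>)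

definition Q where "Q = opser aA K"
definition \<beta> where "\<beta> = (\<Sum>n. cmod (aA n) * \<rho> ^ n)"

lemma \<beta>0: "\<beta> \<ge> 0" unfolding \<beta>_def using sumA \<rho> by (intro suminf_nonneg) auto

lemma linQ: "lin Q" unfolding Q_def by (rule opser_lin[OF bndK sumA linK])
lemma sadjQ: "sadj Q" unfolding Q_def by (rule opser_sadj[OF bndK sumA sadjK]) (simp add: aA_def)
lemma bndQ: "bnd Q \<beta>"
  using opser_bound[OF bndK sumA] \<beta>0 unfolding bnd_def Q_def \<beta>_def by auto
lemma UQ: "U (Q x) = Q (U x)" unfolding Q_def by (rule opser_comm[OF bndK sumA sadjU UK])

lemma JKpow:
  assumes lJ: "lin J" and JU: "\<And>x. J (U x) = Ui (J x)"
  shows "J ((K ^^ n) x) = (if even n then (K ^^ n) (J x) else - (K ^^ n) (J x))"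
proof (induction n)
  case (Suc n)
  have "J ((K ^^ Suc n) x) = - K (J ((K ^^ n) x))" using JK[OF lJ JU] by simp
  then show ?case using Suc by (simp add: lin_minus[OF linK])
qed simp

lemma JQ:
  assumes lJ: "lin J" and sJ: "sadj J" and JU: "\<And>x. J (U x) = Ui (J x)"
  shows "J (Q x) = - Q (J x)"
proof (rule weak_eq)
  fix w
  have s1: "(\<lambda>n. aA n * p (J w) ((K ^^ n) x)) sums p (J w) (Q x)"
    unfolding Q_def by (rule opser_sums[OF bndK sumA])
  have s2: "(\<lambda>n. aA n * p w ((K ^^ n) (J x))) sums p w (Q (J x))"
    unfolding Q_def by (rule opser_sums[OF bndK sumA])
  have e: "aA n * p (J w) ((K ^^ n) x) = - (aA n * p w ((K ^^ n) (J x)))" for n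
    by (simp add: sadj_D[OF sJ] JKpow[OF lJ JU] p_minus_r aA_def Aser_nth)
  have "(\<lambda>n. - (aA n * p w ((K ^^ n) (J x)))) sums p (J w) (Q x)" using s1 unfolding e .
  moreover have "(\<lambda>n. - (aA n * p w ((K ^^ n) (J x)))) sums - p w (Q (J x))"
    using s2 by (rule sums_minus)
  ultimately have "p (J w) (Q x) = - p w (Q (J x))" using sums_unique2 by blast
  then show "p w (J (Q x)) = p w (- Q (J x))" by (simp add: sadj_D[OF sJ, symmetric] p_minus_r)
qed

lemma Qpow: "(\<lambda>n. complex_of_real ((Aser ^ k) $ n) * p w ((K ^^ n) x)) sums p w ((Q ^^ k) x)"
proof (induction k arbitrary: w)
  case 0
  have "(\<lambda>n. complex_of_real ((Aser ^ 0) $ n) * p w ((K ^^ n) x)) =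
        (\<lambda>n. if n = 0 then p w ((K ^^ n) x) else 0)" by (rule ext) simp
  then show ?case using sums_single[of 0 "\<lambda>n. p w ((K ^^ n) x)"] by simp
next
  case (Suc k)
  define c where "c n = (Aser ^ k) $ n" for n
  define g where "g q = p w ((K ^^ q) x)" for q
  have ps: "(\<lambda>n. c n * \<rho>^n) sums (\<Sum>n. Aser $ n * \<rho>^n)^k" "\<forall>n. c n \<ge> 0"
    using pow_sums[OF Aser_nonneg \<rho>(1) sumA', of k] unfolding c_def by auto
  have inner: "p ((K ^^ m) w) ((Q ^^ k) x) = (\<Sum>n. complex_of_real (c n) * g (m + n))" for m
  proof -
    have "(\<lambda>n. complex_of_real (c n) * g (m + n)) sums p ((K ^^ m) w) ((Q ^^ k) x)"
      using Suc.IH[of "(K ^^ m) w"]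
      by (simp add: c_def g_def sadj_pow[OF sadjK] funpow_add)
    then show ?thesis by (simp add: sums_iff)
  qed
  have "(\<lambda>m. aA m * p w ((K ^^ m) ((Q ^^ k) x))) sums p w (Q ((Q ^^ k) x))"
    unfolding Q_def by (rule opser_sums[OF bndK sumA])
  then have s1: "(\<lambda>m. complex_of_real (Aser $ m) * (\<Sum>n. complex_of_real (c n) * g (m + n))) sums p w ((Q ^^ Suc k) x)"
    by (simp add: aA_def inner[symmetric] sadj_pow[OF sadjK])
  have gb: "cmod (g q) \<le> (N w * N x) * \<rho> ^ q" for q
  proof -
    have "cmod (g q) \<le> N w * N ((K ^^ q) x)" unfolding g_def by (rule CS)
    also have "\<dots> \<le> N w * (\<rho> ^ q * N x)" by (intro mult_left_mono bnd_pow[OF bndK] N_nonneg)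
    finally show ?thesis by (simp add: algebra_simps)
  qed
  have s2: "(\<lambda>q. complex_of_real (\<Sum>i\<le>q. Aser $ i * c (q - i)) * g q) sums
      (\<Sum>m. complex_of_real (Aser $ m) * (\<Sum>n. complex_of_real (c n) * g (m + n)))"
    by (rule cauchy_g[OF Aser_nonneg _ \<rho>(1) sumA' sums_summable[OF ps(1)] gb]) (use ps in auto)
  have e: "(\<Sum>i\<le>q. Aser $ i * c (q - i)) = (Aser ^ Suc k) $ q" for q
    by (simp add: c_def fps_mult_nth atLeast0AtMost)
  have "(\<Sum>m. complex_of_real (Aser $ m) * (\<Sum>n. complex_of_real (c n) * g (m + n))) = p w ((Q ^^ Suc k) x)"
    using s1 by (simp add: sums_iff)
  then show ?case using s2 unfolding e g_def by simp
qed

lemma E_eq: "opser eE K x = U x"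
proof -
  define z where "z = opser eE K x"
  have zK: "z - K z = x + K x"
  proof (rule weak_eq)
    fix w
    define g where "g n = p w ((K ^^ n) x)" for n
    have s1: "(\<lambda>n. eE n * g n) sums p w z"
      unfolding z_def g_def by (rule opser_sums[OF bndK sumE])
    have s2: "(\<lambda>n. eE n * g (Suc n)) sums p (K w) z"
      using opser_sums[OF bndK sumE, of "K w" x] unfolding z_def g_def
      by (simp add: sadj_D[OF sadjK])
    have s3: "(\<lambda>n. eE (Suc n) * g (Suc n)) sums (p w z - g 0)"
      using s1 sums_Suc_iff[of "\<lambda>n. eE n * g n" "p w z - g 0"] by (simp add: eE_def Eser_nth)
    have e: "eE n * g (Suc n) = eE (Suc n) * g (Suc n) - (if n = 0 then g 1 else 0)" for n
      by (simp add: eE_def Eser_nth)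
    have "(\<lambda>n. eE (Suc n) * g (Suc n) - (if n = 0 then g 1 else 0)) sums (p w z - g 0 - g 1)"
      by (intro sums_diff s3) (use sums_single[of 0 "\<lambda>_. g 1"] in simp)
    then have "p (K w) z = p w z - g 0 - g 1" using s2 unfolding e using sums_unique2 by blast
    then show "p w (z - K z) = p w (x + K x)"
      by (simp add: p_diff_r p_add_r sadj_D[OF sadjK, symmetric] g_def)
  qed
  have KV: "K (U x) + K x = U x - x"
  proof -
    have "K (U x) + K x = K (V x)" by (simp add: V_def lin_add[OF linK])
    also have "\<dots> = U x - x" by (simp add: K_def RV)
    finally show ?thesis .
  qed
  define d where "d = z - U x"
  have KU: "K (U x) = U x - (x + K x)" using KV by (metis add_diff_cancel_right' diff_diff_eq)
  have UK': "U x - K (U x) = x + K x" unfolding KU by simp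
  have "d - K d = (z - K z) - (U x - K (U x))" by (simp add: d_def lin_diff[OF linK] algebra_simps)
  also have "\<dots> = 0" using zK UK' by simp
  finally have "d - K d = 0" .
  then have "d = K d" by simp
  then have "N d \<le> \<rho> * N d" using bnd_N[OF bndK, of d] by simp
  then have "(1 - \<rho>) * N d \<le> 0" by (simp add: algebra_simps)
  then have "N d = 0" using \<rho>(2) N_nonneg[of d] by (simp add: mult_le_0_iff)
  then show ?thesis by (simp add: d_def z_def N_zero_iff)
qed

end


unbundle fps_syntax

context constr begin

interpretation V: vector_space sc by (rule vs)

lemma Eser_coeff: "(\<Sum>k\<le>n. (Aser ^ k) $ n / fact k) = Eser $ n"
proof -
  have "Eser $ n = (fps_exp 1 oo Aser) $ n" by (simp add: exp_A)
  also have "\<dots> = (\<Sum>k\<le>n. (Aser ^ k) $ n / fact k)"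
    by (simp add: fps_compose_nth atLeast0AtMost)
  finally show ?thesis by simp
qed

lemma Qexp: "exp_series_to sc N Q x (U x)"
proof -
  define z where "z k = sc (inverse (fact k)) ((Q ^^ k) x)" for k
  have Nz: "N (z k) \<le> inverse (fact k) * \<beta> ^ k * N x" for k
  proof -
    have "N (z k) = inverse (fact k) * N ((Q ^^ k) x)"
      by (simp add: z_def N_scale norm_inverse)
    also have "\<dots> \<le> inverse (fact k) * (\<beta> ^ k * N x)"
      by (intro mult_left_mono bnd_pow[OF bndQ]) auto
    finally show ?thesis by (simp add: mult.assoc)
  qed
  have "summable (\<lambda>k. N (z k))"
    by (rule summable_comparison_test[OF _ summable_mult2[OF summable_exp[of \<beta>], of "N x"]])
       (use Nz N_nonneg in auto)
  from vser[OF this] obtain y where y: "(\<lambda>n. N ((\<Sum>k<n. z k) - y)) \<longlonglongrightarrow> 0" by blast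
  have "y = U x"
  proof (rule weak_eq)
    fix w
    define g where "g n = p w ((K ^^ n) x)" for n
    have gb: "cmod (g q) \<le> (N w * N x) * \<rho> ^ q" for q
    proof -
      have "cmod (g q) \<le> N w * N ((K ^^ q) x)" unfolding g_def by (rule CS)
      also have "\<dots> \<le> N w * (\<rho> ^ q * N x)" by (intro mult_left_mono bnd_pow[OF bndK] N_nonneg)
      finally show ?thesis by (simp add: algebra_simps)
    qed
    define \<alpha> where "\<alpha> = (\<Sum>n. Aser $ n * \<rho> ^ n)"
    have cs: "(\<lambda>n. (Aser ^ k) $ n * \<rho> ^ n) sums \<alpha> ^ k" for k
      using pow_sums[OF Aser_nonneg \<rho>(1) sumA'] unfolding \<alpha>_def by blast
    have c0: "(Aser ^ k) $ n \<ge> 0" for k n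
      using pow_sums[OF Aser_nonneg \<rho>(1) sumA'] by blast
    have cz: "n < k \<Longrightarrow> (Aser ^ k) $ n = 0" for k n
      using pow_zero[of Aser] by (simp add: Aser_nth)
    obtain S where S1: "(\<lambda>k. complex_of_real (1 / fact k) * (\<Sum>n. complex_of_real ((Aser ^ k) $ n) * g n)) sums S"
      and S2: "(\<lambda>n. complex_of_real (\<Sum>k\<le>n. (Aser ^ k) $ n / fact k) * g n) sums S"
      using exp_swap[where c="\<lambda>k n. (Aser ^ k) $ n" and g=g, OF c0 cz cs \<rho>(1) gb] by blast
    have "(\<Sum>n. complex_of_real ((Aser ^ k) $ n) * g n) = p w ((Q ^^ k) x)" for k
      using Qpow[of k w x] unfolding g_def by (simp add: sums_iff)
    then have "(\<lambda>k. p w (z k)) sums S" using S1 by (simp add: z_def p_scale_r divide_inverse mult.commute)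
    moreover have "(\<lambda>k. p w (z k)) sums p w y" by (rule vser_sums[OF y])
    ultimately have wy: "p w y = S" using sums_unique2 by blast
    have "(\<lambda>n. eE n * g n) sums p w (opser eE K x)"
      unfolding g_def by (rule opser_sums[OF bndK sumE])
    then have "(\<lambda>n. eE n * g n) sums p w (U x)" by (simp add: E_eq)
    moreover have "(\<lambda>n. eE n * g n) sums S" using S2 by (simp add: Eser_coeff eE_def)
    ultimately show "p w y = p w (U x)" using wy sums_unique2 by blast
  qed
  then show ?thesis using y unfolding exp_series_to_def z_def by simp
qed

end

context hilb begin

interpretation V: vector_space sc by (rule vs)

lemma conj_exp:
  assumes lJ: "lin J" and bJ: "bnd J rJ" and JJ: "\<And>x. J (J x) = x"
    and JQ: "\<And>v. J (Q v) = - Q (J v)"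
    and ex: "exp_series_to sc N Q (J x) y"
  shows "exp_series_to sc N (\<lambda>v. - Q v) x (J y)"
proof -
  have pw: "((\<lambda>v. - Q v) ^^ k) x = J ((Q ^^ k) (J x))" for k
  proof (induction k)
    case 0 then show ?case by (simp add: JJ)
  next
    case (Suc k)
    have "((\<lambda>v. - Q v) ^^ Suc k) x = - Q (J ((Q ^^ k) (J x)))" using Suc by simp
    also have "\<dots> = J (Q ((Q ^^ k) (J x)))" using JQ[of "(Q ^^ k) (J x)"] by simp
    finally show ?case by simp
  qed
  define S where "S n = (\<Sum>k<n. sc (inverse (fact k)) ((Q ^^ k) (J x)))" for n
  have eS: "(\<Sum>k<n. sc (inverse (fact k)) (((\<lambda>v. - Q v) ^^ k) x)) = J (S n)" for n
    by (simp add: S_def pw lin_sum[OF lJ] lin_scale[OF lJ])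
  have t: "(\<lambda>n. N (S n - y)) \<longlonglongrightarrow> 0" using ex unfolding exp_series_to_def S_def .
  have "(\<lambda>n. N (J (S n) - J y)) \<longlonglongrightarrow> 0"
  proof (rule real_tendsto_sandwich[OF _ _ tendsto_const])
    show "\<forall>\<^sub>F n in sequentially. 0 \<le> N (J (S n) - J y)" by (simp add: N_nonneg)
    show "\<forall>\<^sub>F n in sequentially. N (J (S n) - J y) \<le> rJ * N (S n - y)"
      using bnd_N[OF bJ] by (simp add: lin_diff[OF lJ, symmetric])
    show "(\<lambda>n. rJ * N (S n - y)) \<longlonglongrightarrow> 0" using tendsto_mult_right_zero[OF t] by simp
  qed
  then show ?thesis unfolding exp_series_to_def eS .
qed

end


context hilb begin

interpretation V: vector_space sc by (rule vs)

lemma lin_iff_linear: "lin T \<longleftrightarrow> Vector_Spaces.linear sc sc T"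
  by (simp add: lin_def module_hom_iff_linear[symmetric] module_hom_iff module_iff_vector_space vs)

lemma bounded_bnd: "bounded_wrt N T \<Longrightarrow> \<exists>r. bnd T r"
proof -
  assume "bounded_wrt N T"
  then obtain K where K: "\<And>x. N (T x) \<le> K * N x" unfolding bounded_wrt_def by blast
  have "N (T x) \<le> max K 0 * N x" for x
    using K[of x] N_nonneg[of x] by (smt (verit) mult_right_mono max.cobounded1)
  then show ?thesis unfolding bnd_def by (intro exI[of _ "max K 0"]) auto
qed

lemma bnd_bounded: "bnd T r \<Longrightarrow> bounded_wrt N T"
  unfolding bnd_def bounded_wrt_def by blast

lemma dense_zero:
  assumes dense: "dense_image N \<iota>" and add: "\<And>x y. f (x - y) = f x - f y"
    and bd: "\<And>x. cmod (f x) \<le> C * N x" and z: "\<And>u. f (\<iota> u) = 0"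
  shows "f x = 0"
proof (rule ccontr)
  assume ne: "f x \<noteq> 0"
  define a where "a = cmod (f x)"
  have a0: "a > 0" using ne by (simp add: a_def)
  define e where "e = a / (\<bar>C\<bar> + 1)"
  have e0: "e > 0" using a0 by (simp add: e_def add_pos_nonneg)
  obtain u where u: "N (x - \<iota> u) < e" using dense e0 unfolding dense_image_def by blast
  have "f (x - \<iota> u) = f x" using add[of x "\<iota> u"] z[of u] by simp
  then have "a \<le> C * N (x - \<iota> u)" using bd[of "x - \<iota> u"] by (simp add: a_def)
  also have "\<dots> \<le> \<bar>C\<bar> * N (x - \<iota> u)" using N_nonneg by (intro mult_right_mono) auto
  also have "\<dots> \<le> \<bar>C\<bar> * e" using u by (intro mult_left_mono) auto
  also have "\<dots> < a"
  proof -
    have "\<bar>C\<bar> * e = a * (\<bar>C\<bar> / (\<bar>C\<bar> + 1))" by (simp add: e_def)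
    also have "\<dots> < a * 1" using a0 by (intro mult_strict_left_mono) auto
    finally show ?thesis by simp
  qed
  finally show False by simp
qed

lemma dense_ext:
  assumes dense: "dense_image N \<iota>" and l1: "lin T1" and b1: "bnd T1 r1" and l2: "lin T2" and b2: "bnd T2 r2"
    and e: "\<And>u. T1 (\<iota> u) = T2 (\<iota> u)"
  shows "T1 x = T2 x"
proof -
  have "p w (T1 x - T2 x) = 0" for w
  proof (rule dense_zero[OF dense, where f="\<lambda>v. p w (T1 v - T2 v)" and C="N w * (r1 + r2)"])
    show "p w (T1 (a - b) - T2 (a - b)) = p w (T1 a - T2 a) - p w (T1 b - T2 b)" for a b
      unfolding lin_diff[OF l1] lin_diff[OF l2] p_diff_r by (simp add: algebra_simps)
    show "cmod (p w (T1 v - T2 v)) \<le> N w * (r1 + r2) * N v" for v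
    proof -
      have "cmod (p w (T1 v - T2 v)) \<le> N w * N (T1 v - T2 v)" by (rule CS)
      also have "N (T1 v - T2 v) \<le> N (T1 v) + N (T2 v)"
        using N_triangle[of "T1 v" "- T2 v"] by (simp add: N_minus)
      also have "\<dots> \<le> (r1 + r2) * N v" using bnd_N[OF b1, of v] bnd_N[OF b2, of v] by (simp add: algebra_simps)
      finally show ?thesis by (simp add: N_nonneg mult_left_mono mult.assoc)
    qed
    show "p w (T1 (\<iota> u) - T2 (\<iota> u)) = 0" for u by (simp add: e)
  qed
  then have "T1 x - T2 x = 0" using weak_eq[of "T1 x - T2 x" 0] by simp
  then show ?thesis by simp
qed

lemma dense_sesq:
  assumes dense: "dense_image N \<iota>"
    and dl: "\<And>x y z. B (x - y) z = B x z - B y z" and dr: "\<And>x y z. B x (y - z) = B x y - B x z"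
    and bd: "\<And>x y. cmod (B x y) \<le> C * N x * N y"
    and z: "\<And>u v. B (\<iota> u) (\<iota> v) = 0"
  shows "B x y = 0"
proof -
  have step: "B (\<iota> u) y = 0" for u y
    by (rule dense_zero[OF dense, where C="C * N (\<iota> u)"]) (use dr bd z in auto)
  show ?thesis
    by (rule dense_zero[OF dense, where f="\<lambda>x. B x y" and C="C * N y"])
       (use dl bd step in \<open>auto simp: algebra_simps\<close>)
qed

end

lemma hs_add_l: "herm_sesq sc ip \<Longrightarrow> ip (x + y) z = ip x z + ip y z"
  unfolding herm_sesq_def by (metis complex_cnj_add)

lemma hs_add_r: "herm_sesq sc ip \<Longrightarrow> ip x (y + z) = ip x y + ip x z"
  unfolding herm_sesq_def by blast

lemma hs_minus_r: "herm_sesq sc ip \<Longrightarrow> ip x (- y) = - ip x y"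
proof -
  assume h: "herm_sesq sc ip"
  have "ip x y + ip x (- y) = ip x 0" using hs_add_r[OF h, of x y "-y"] by simp
  moreover have "ip x 0 = 0" using hs_add_r[OF h, of x 0 0] by simp
  ultimately show ?thesis by (simp add: add_eq_0_iff)
qed

lemma hs_minus_l: "herm_sesq sc ip \<Longrightarrow> ip (- x) y = - ip x y"
proof -
  assume h: "herm_sesq sc ip"
  have "ip (- x) y = cnj (ip y (- x))" using h unfolding herm_sesq_def by blast
  also have "\<dots> = - cnj (ip y x)" by (simp add: hs_minus_r[OF h])
  also have "cnj (ip y x) = ip x y" using h unfolding herm_sesq_def by metis
  finally show ?thesis .
qed

lemma fd_plus_props:
  assumes vs: "vector_space sc" and fd: "fundamental_decomposition sc ip Lp Lm"
  shows "fd_plus Lp Lm f \<in> Lp" "f - fd_plus Lp Lm f \<in> Lm"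
    "u \<in> Lp \<Longrightarrow> f - u \<in> Lm \<Longrightarrow> fd_plus Lp Lm f = u"
proof -
  interpret M: module sc using vs by (simp add: module_iff_vector_space)
  have sp: "M.subspace Lp" and sm: "M.subspace Lm"
    using fd unfolding fundamental_decomposition_def positive_subspace_def negative_subspace_def by auto
  have cap: "Lp \<inter> Lm = {0}" using fd unfolding fundamental_decomposition_def by blast
  have uniq: "u = u'" if "u \<in> Lp" "f - u \<in> Lm" "u' \<in> Lp" "f - u' \<in> Lm" for u u'
  proof -
    have "u - u' \<in> Lp" using M.subspace_diff[OF sp that(1,3)] .
    moreover have "(f - u') - (f - u) \<in> Lm" using M.subspace_diff[OF sm that(4,2)] .
    then have "u - u' \<in> Lm" by simp
    ultimately have "u - u' = 0" using cap by blast
    then show ?thesis by simp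
  qed
  obtain u v where uv: "u \<in> Lp" "v \<in> Lm" "f = u + v"
    using fd unfolding fundamental_decomposition_def by blast
  have ex: "u \<in> Lp \<and> f - u \<in> Lm" using uv by simp
  have th: "fd_plus Lp Lm f = u"
    unfolding fd_plus_def by (rule the_equality) (use uniq ex in blast)+
  show "fd_plus Lp Lm f \<in> Lp" "f - fd_plus Lp Lm f \<in> Lm" using th ex by auto
  show "u' \<in> Lp \<Longrightarrow> f - u' \<in> Lm \<Longrightarrow> fd_plus Lp Lm f = u'" for u'
    using th ex uniq by blast
qed

lemma fd_J_J:
  assumes vs: "vector_space sc" and fd: "fundamental_decomposition sc ip Lp Lm"
  shows "fd_J Lp Lm (fd_J Lp Lm f) = f"
proof -
  interpret M: module sc using vs by (simp add: module_iff_vector_space)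
  have sm: "M.subspace Lm"
    using fd unfolding fundamental_decomposition_def negative_subspace_def by auto
  note P = fd_plus_props[OF vs fd]
  define u where "u = fd_plus Lp Lm f"
  have u: "u \<in> Lp" "f - u \<in> Lm" using P(1,2) by (auto simp: u_def)
  have "fd_J Lp Lm f - u = - (f - u)" by (simp add: fd_J_def fd_minus_def u_def)
  then have "fd_J Lp Lm f - u \<in> Lm" using M.subspace_neg[OF sm u(2)] by simp
  then have "fd_plus Lp Lm (fd_J Lp Lm f) = u" using P(3) u(1) by blast
  then show ?thesis by (simp add: fd_J_def fd_minus_def u_def)
qed

lemma fd_ip_J:
  assumes vs: "vector_space sc" and h: "herm_sesq sc ip" and fd: "fundamental_decomposition sc ip Lp Lm"
  shows "fd_ip ip Lp Lm (fd_J Lp Lm f) g = ip f g"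
proof -
  interpret M: module sc using vs by (simp add: module_iff_vector_space)
  have sm: "M.subspace Lm"
    using fd unfolding fundamental_decomposition_def negative_subspace_def by auto
  have orth: "\<And>a b. a \<in> Lp \<Longrightarrow> b \<in> Lm \<Longrightarrow> ip a b = 0"
    using fd unfolding fundamental_decomposition_def by blast
  have orth': "ip b a = 0" if "a \<in> Lp" "b \<in> Lm" for a b
  proof -
    have "ip b a = cnj (ip a b)" using h unfolding herm_sesq_def by blast
    then show ?thesis using orth[OF that] by simp
  qed
  note P = fd_plus_props[OF vs fd]
  define u where "u = fd_plus Lp Lm f"
  define v where "v = f - u"
  define g1 where "g1 = fd_plus Lp Lm g"
  define g2 where "g2 = g - g1"
  have u: "u \<in> Lp" "v \<in> Lm" using P(1,2) by (auto simp: u_def v_def)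
  have gg: "g1 \<in> Lp" "g2 \<in> Lm" using P(1,2) by (auto simp: g1_def g2_def)
  have "fd_J Lp Lm f - u = - v" by (simp add: fd_J_def fd_minus_def u_def v_def)
  then have "fd_J Lp Lm f - u \<in> Lm" using M.subspace_neg[OF sm u(2)] by simp
  then have pJ: "fd_plus Lp Lm (fd_J Lp Lm f) = u" using P(3) u(1) by blast
  have mJ0: "fd_minus Lp Lm (fd_J Lp Lm f) = fd_J Lp Lm f - u"
    unfolding fd_minus_def pJ ..
  have mJ: "fd_minus Lp Lm (fd_J Lp Lm f) = - v"
    unfolding mJ0 by (simp add: fd_J_def fd_minus_def u_def v_def)
  have g2': "fd_minus Lp Lm g = g2" by (simp add: fd_minus_def g1_def g2_def)
  have "fd_ip ip Lp Lm (fd_J Lp Lm f) g = ip u g1 + ip v g2"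
    unfolding fd_ip_def pJ mJ g2' g1_def[symmetric] by (simp add: hs_minus_l[OF h])
  also have "\<dots> = ip (u + v) (g1 + g2)"
    by (simp add: hs_add_l[OF h] hs_add_r[OF h] orth[OF u(1) gg(2)] orth'[OF gg(1) u(2)])
  also have "u + v = f" by (simp add: v_def)
  also have "g1 + g2 = g" by (simp add: g2_def)
  finally show ?thesis .
qed


theorem proposition3p2:
  fixes sc :: "complex \<Rightarrow> 'a::ab_group_add \<Rightarrow> 'a"
    and ip :: "'a \<Rightarrow> 'a \<Rightarrow> complex"
    and Lp Lm Mp Mm :: "'a set"
    and sc' :: "complex \<Rightarrow> 'b::ab_group_add \<Rightarrow> 'b"
    and \<iota> :: "'a \<Rightarrow> 'b"
    and pL pM :: "'b \<Rightarrow> 'b \<Rightarrow> complex"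
    and JLe JMe :: "'b \<Rightarrow> 'b"
  assumes "vector_space sc"
    and "herm_sesq sc ip" and "non_degenerate ip" and "indefinite ip"
    and "fundamental_decomposition sc ip Lp Lm"
    and "fundamental_decomposition sc ip Mp Mm"
    and "norms_equiv (fd_norm ip Lp Lm) (fd_norm ip Mp Mm)"
    and "common_completion sc (fd_ip ip Lp Lm) (fd_ip ip Mp Mm) sc' \<iota> pL pM"
    and "continuous_extension sc' (form_norm pL) \<iota> (fd_J Lp Lm) JLe"
    and "continuous_extension sc' (form_norm pL) \<iota> (fd_J Mp Mm) JMe"
  shows "\<exists>Q. Vector_Spaces.linear sc' sc' Q \<and>
           bounded_wrt (form_norm pL) Q \<and> self_adjoint_wrt pL Q \<and>
           bounded_wrt (form_norm pM) Q \<and> self_adjoint_wrt pM Q \<and>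
           (\<forall>x. JLe (Q x) = - Q (JLe x)) \<and> (\<forall>x. JMe (Q x) = - Q (JMe x)) \<and>
           (\<forall>x. exp_series_to sc' (form_norm pL) Q x (JLe (JMe x))) \<and>
           (\<forall>x. exp_series_to sc' (form_norm pL) (\<lambda>y. - Q y) x (JMe (JLe x)))"
proof -
  note vs = assms(1) and hip = assms(2) and fdL = assms(5) and fdM = assms(6)
  have vs': "vector_space sc'" and ipL: "inner_product_form sc' pL" and ipM: "inner_product_form sc' pM"
    and neq: "norms_equiv (form_norm pL) (form_norm pM)"
    and compl: "complete_wrt (form_norm pL)" and dense: "dense_image (form_norm pL) \<iota>"
    and eL: "\<And>x y. pL (\<iota> x) (\<iota> y) = fd_ip ip Lp Lm x y"
    and eM: "\<And>x y. pM (\<iota> x) (\<iota> y) = fd_ip ip Mp Mm x y"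
    using assms(8) unfolding common_completion_def by auto
  have Hh: "hilb sc' pL" by (simp add: hilb_def hs_def hilb_axioms_def vs' ipL compl)
  interpret H: hilb sc' pL by (rule Hh)
  interpret HM: hs sc' pM by (simp add: hs_def vs' ipM)
  let ?N = "form_norm pL" and ?NM = "form_norm pM"
  obtain c C where cC: "c > 0" "C > 0" "\<And>x. c * ?N x \<le> ?NM x" "\<And>x. ?NM x \<le> C * ?N x"
    using neq unfolding norms_equiv_def by blast
  have JL: "H.lin JLe" "bounded_wrt ?N JLe" "\<And>x. JLe (\<iota> x) = \<iota> (fd_J Lp Lm x)"
    using assms(9) unfolding continuous_extension_def H.lin_iff_linear by auto
  have JM: "H.lin JMe" "bounded_wrt ?N JMe" "\<And>x. JMe (\<iota> x) = \<iota> (fd_J Mp Mm x)"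
    using assms(10) unfolding continuous_extension_def H.lin_iff_linear by auto
  obtain rL where rL: "H.bnd JLe rL" using H.bounded_bnd[OF JL(2)] by blast
  obtain rM where rM: "H.bnd JMe rM" using H.bounded_bnd[OF JM(2)] by blast
  have lin_id: "H.lin (\<lambda>x. x)" by (simp add: H.lin_def)
  have bnd_id: "H.bnd (\<lambda>x. x) 1" by (simp add: H.bnd_def)
  have lin_comp: "H.lin (\<lambda>x. A (B x))" if "H.lin A" "H.lin B" for A B
    using that by (simp add: H.lin_def)
  have bnd_comp: "H.bnd (\<lambda>x. A (B x)) (a * b)" if "H.bnd A a" "H.bnd B b" for A B a b
  proof -
    have "?N (A (B x)) \<le> (a * b) * ?N x" for x
    proof -
      have "?N (A (B x)) \<le> a * ?N (B x)" by (rule H.bnd_N[OF that(1)])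
      also have "\<dots> \<le> a * (b * ?N x)" by (intro mult_left_mono H.bnd_N[OF that(2)] H.bnd_r[OF that(1)])
      finally show ?thesis by (simp add: mult.assoc)
    qed
    then show ?thesis using that by (simp add: H.bnd_def)
  qed
  have JLL: "JLe (JLe x) = x" for x
    by (rule H.dense_ext[OF dense lin_comp[OF JL(1) JL(1)] bnd_comp[OF rL rL] lin_id bnd_id])
       (simp add: JL(3) fd_J_J[OF vs fdL])
  have JMM: "JMe (JMe x) = x" for x
    by (rule H.dense_ext[OF dense lin_comp[OF JM(1) JM(1)] bnd_comp[OF rM rM] lin_id bnd_id])
       (simp add: JM(3) fd_J_J[OF vs fdM])
  have cnjL: "pL y x = cnj (pL x y)" for x y by (rule H.p_cnj)
  have sadjJL: "H.sadj JLe"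
    unfolding H.sadj_def
  proof (intro allI)
    fix x y
    have "pL (JLe x) y - pL x (JLe y) = 0"
    proof (rule H.dense_sesq[OF dense, where B="\<lambda>x y. pL (JLe x) y - pL x (JLe y)" and C="2 * rL"])
      show "pL (JLe (a - b)) z - pL (a - b) (JLe z) = pL (JLe a) z - pL a (JLe z) - (pL (JLe b) z - pL b (JLe z))" for a b z
        unfolding H.lin_diff[OF JL(1)] H.p_diff_l by simp
      show "pL (JLe a) (b - z) - pL a (JLe (b - z)) = pL (JLe a) b - pL a (JLe b) - (pL (JLe a) z - pL a (JLe z))" for a b z
        unfolding H.lin_diff[OF JL(1)] H.p_diff_r by simp
      show "cmod (pL (JLe a) b - pL a (JLe b)) \<le> 2 * rL * ?N a * ?N b" for a b
      proof -
        have "cmod (pL (JLe a) b - pL a (JLe b)) \<le> cmod (pL (JLe a) b) + cmod (pL a (JLe b))"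
          by (rule norm_triangle_ineq4)
        also have "cmod (pL (JLe a) b) \<le> (rL * ?N a) * ?N b"
          using H.CS[of "JLe a" b] H.bnd_N[OF rL, of a] H.N_nonneg[of b]
          by (meson mult_right_mono order_trans)
        also have "cmod (pL a (JLe b)) \<le> ?N a * (rL * ?N b)"
          using H.CS[of a "JLe b"] H.bnd_N[OF rL, of b] H.N_nonneg[of a]
          by (meson mult_left_mono order_trans)
        finally show ?thesis by (simp add: algebra_simps)
      qed
      show "pL (JLe (\<iota> u)) (\<iota> v) - pL (\<iota> u) (JLe (\<iota> v)) = 0" for u v
      proof -
        have "pL (JLe (\<iota> u)) (\<iota> v) = ip u v" by (simp add: JL(3) eL fd_ip_J[OF vs hip fdL])
        moreover have "pL (\<iota> u) (JLe (\<iota> v)) = cnj (ip v u)"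
        proof -
          have "pL (\<iota> u) (JLe (\<iota> v)) = pL (\<iota> u) (\<iota> (fd_J Lp Lm v))" by (simp add: JL(3))
          also have "\<dots> = cnj (pL (\<iota> (fd_J Lp Lm v)) (\<iota> u))" by (rule cnjL)
          also have "\<dots> = cnj (ip v u)" by (simp add: eL fd_ip_J[OF vs hip fdL])
          finally show ?thesis .
        qed
        moreover have "cnj (ip v u) = ip u v" using hip unfolding herm_sesq_def by metis
        ultimately show ?thesis by simp
      qed
    qed
    then show "pL (JLe x) y = pL x (JLe y)" by simp
  qed
  define U where "U x = JLe (JMe x)" for x
  define Ui where "Ui x = JMe (JLe x)" for x
  have linU: "H.lin U" unfolding U_def by (rule lin_comp[OF JL(1) JM(1)])
  have linUi: "H.lin Ui" unfolding Ui_def by (rule lin_comp[OF JM(1) JL(1)])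
  have bndU: "H.bnd U (rL * rM)" unfolding U_def by (rule bnd_comp[OF rL rM])
  have pMU: "pM x y = pL (U x) y" for x y
  proof -
    have "pM x y - pL (U x) y = 0"
    proof (rule H.dense_sesq[OF dense, where B="\<lambda>x y. pM x y - pL (U x) y" and C="C * C + rL * rM"])
      show "pM (a - b) z - pL (U (a - b)) z = pM a z - pL (U a) z - (pM b z - pL (U b) z)" for a b z
        unfolding H.lin_diff[OF linU] H.p_diff_l HM.p_diff_l by simp
      show "pM a (b - z) - pL (U a) (b - z) = pM a b - pL (U a) b - (pM a z - pL (U a) z)" for a b z
        unfolding H.p_diff_r HM.p_diff_r by simp
      show "cmod (pM a b - pL (U a) b) \<le> (C * C + rL * rM) * ?N a * ?N b" for a b
      proof -
        have "cmod (pM a b - pL (U a) b) \<le> cmod (pM a b) + cmod (pL (U a) b)"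
          by (rule norm_triangle_ineq4)
        also have "cmod (pM a b) \<le> (C * ?N a) * (C * ?N b)"
          using HM.CS[of a b] cC(4)[of a] cC(4)[of b] HM.N_nonneg[of a] HM.N_nonneg[of b]
          by (meson mult_mono order_trans)
        also have "cmod (pL (U a) b) \<le> ((rL * rM) * ?N a) * ?N b"
          using H.CS[of "U a" b] H.bnd_N[OF bndU, of a] H.N_nonneg[of b]
          by (meson mult_right_mono order_trans)
        finally show ?thesis by (simp add: algebra_simps)
      qed
      show "pM (\<iota> u) (\<iota> v) - pL (U (\<iota> u)) (\<iota> v) = 0" for u v
      proof -
        have "pM (\<iota> u) (\<iota> v) = ip (fd_J Mp Mm u) v"
          using fd_ip_J[OF vs hip fdM, of "fd_J Mp Mm u" v] by (simp add: eM fd_J_J[OF vs fdM])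
        moreover have "pL (U (\<iota> u)) (\<iota> v) = ip (fd_J Mp Mm u) v"
          by (simp add: U_def JL(3) JM(3) eL fd_ip_J[OF vs hip fdL])
        ultimately show ?thesis by simp
      qed
    qed
    then show ?thesis by simp
  qed
  have UUi: "U (Ui x) = x" for x by (simp add: U_def Ui_def JLL JMM)
  have UiU: "Ui (U x) = x" for x by (simp add: U_def Ui_def JLL JMM)
  have sadjU: "H.sadj U"
    unfolding H.sadj_def
  proof (intro allI)
    fix x y
    have "pL (U x) y = pM x y" by (simp add: pMU)
    also have "\<dots> = cnj (pM y x)" by (rule HM.p_cnj)
    also have "\<dots> = cnj (pL (U y) x)" by (simp add: pMU)
    also have "\<dots> = pL x (U y)" by (simp add: cnjL[of x "U y"])
    finally show "pL (U x) y = pL x (U y)" .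
  qed
  have posU: "Re (pL (U x) x) \<ge> c^2 * (?N x)^2" for x
  proof -
    have "Re (pL (U x) x) = (?NM x)^2" by (simp add: pMU[symmetric] HM.N_sq)
    moreover have "(c * ?N x)^2 \<le> (?NM x)^2"
      using cC(3)[of x] cC(1) H.N_nonneg[of x] by (intro power_mono) auto
    ultimately show ?thesis by (simp add: power_mult_distrib)
  qed
  have "constr sc' pL U Ui (c^2) (rL * rM)"
    unfolding constr_def constr_axioms_def using Hh linU linUi UUi UiU sadjU bndU posU cC(1) by auto
  then interpret CO: constr sc' pL U Ui "c^2" "rL * rM" .
  define Q where "Q = CO.Q"
  have JLU: "JLe (U x) = Ui (JLe x)" for x by (simp add: U_def Ui_def JLL)
  have JLQ: "JLe (Q x) = - Q (JLe x)" for x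
    unfolding Q_def by (rule CO.JQ[OF JL(1) sadjJL JLU])
  have JMQ: "JMe (Q x) = - Q (JMe x)" for x
  proof -
    have JMe_eq: "JMe v = JLe (U v)" for v by (simp add: U_def JLL)
    show ?thesis unfolding JMe_eq using JLQ CO.UQ unfolding Q_def by simp
  qed
  have "Vector_Spaces.linear sc' sc' Q" using CO.linQ unfolding Q_def H.lin_iff_linear .
  moreover have "bounded_wrt ?N Q" using CO.bndQ unfolding Q_def by (rule H.bnd_bounded)
  moreover have "self_adjoint_wrt pL Q"
    using CO.sadjQ unfolding Q_def H.sadj_def self_adjoint_wrt_def .
  moreover have "bounded_wrt ?NM Q"
  proof -
    have "?NM (Q x) \<le> (C * CO.\<beta> / c) * ?NM x" for x
    proof -
      have "?NM (Q x) \<le> C * ?N (Q x)" by (rule cC(4))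
      also have "\<dots> \<le> C * (CO.\<beta> * ?N x)"
        using H.bnd_N[OF CO.bndQ] cC(2) unfolding Q_def by (intro mult_left_mono) auto
      also have "CO.\<beta> * ?N x \<le> CO.\<beta> * (?NM x / c)"
        using cC(3)[of x] cC(1) CO.\<beta>0 by (intro mult_left_mono) (auto simp: field_simps)
      finally show ?thesis using cC(2) by (simp add: mult_left_mono)
    qed
    then show ?thesis unfolding bounded_wrt_def by blast
  qed
  moreover have "self_adjoint_wrt pM Q"
    unfolding self_adjoint_wrt_def
  proof (intro allI)
    fix x y
    have "pM (Q x) y = pL (U (Q x)) y" by (rule pMU)
    also have "\<dots> = pL (Q (U x)) y" using CO.UQ unfolding Q_def by simp
    also have "\<dots> = pL (U x) (Q y)" using H.sadj_D[OF CO.sadjQ] unfolding Q_def by simp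
    also have "\<dots> = pM x (Q y)" by (simp add: pMU)
    finally show "pM (Q x) y = pM x (Q y)" .
  qed
  moreover have "\<forall>x. exp_series_to sc' ?N Q x (JLe (JMe x))"
    using CO.Qexp unfolding Q_def U_def by blast
  moreover have "\<forall>x. exp_series_to sc' ?N (\<lambda>y. - Q y) x (JMe (JLe x))"
  proof
    fix x
    have "exp_series_to sc' ?N Q (JLe x) (U (JLe x))" using CO.Qexp unfolding Q_def .
    from H.conj_exp[OF JL(1) rL JLL JLQ this] show "exp_series_to sc' ?N (\<lambda>y. - Q y) x (JMe (JLe x))"
      by (simp add: U_def JLL)
  qed
  ultimately show ?thesis using JLQ JMQ by blast
qed


end
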